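(* Consider an RBM with observed variables $X\in\{-1,1\}^n$ as in the context. Fix $\delta>0$, $\epsilon>0$, $\zeta>0$. Suppose that for every observed variable $u$ we are given a set $n(u)$ which is a subset of the MRF neighborhood of $u$ and contains every $i$ for which there is $T\subseteq[n]$ with $u,i\in T$ and $|\hat f(T)|\ge\zeta$. Suppose that we are given $M$ i.i.d. samples of $X$ from the RBM and run the regression procedure of the context at each $u$. There is an absolute constant $C>0$ such that if \[M\ge C\,\gamma^2\ln(8\cdot n\cdot 2^D/\delta)/\epsilon^2\quad\text{and}\quad \zeta\le\frac{\sqrt\epsilon}{D^d\sqrt{1+e^{2\gamma}}},\] then with probability at least $1-\delta$, for all observed variables $u$, \[\mathbb{E}\big[(\mathbb{P}(X_u=1|X_{[n]\setminus\{u\}})-\sigma(\hat w_u\cdot z_u))^2\big]\le\epsilon,\] where the expectation is over $X$ drawn from the marginal of the RBM (with $\hat w_u$ fixed) and $z_u$ is the feature vector of $X$ at $u$.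
   Context: RBM: $\mathbb{P}(X=x,Y=y)\propto\exp(x^TJy+h^Tx+g^Ty)$ over observed $X\in\{-1,1\}^n$ and latent $Y\in\{-1,1\}^m$; $d=\max_j|\{i:J_{i,j}\ne0\}|$. The marginal of $X$ is $\propto\exp(f(x))$, $f(x)=\sum_j\rho(J_j\cdot x+g_j)+h^Tx$, $\rho(t)=\log(e^t+e^{-t})$, $J_j$ the $j$-th column; $f=\sum_{T\subseteq[n]}\hat f(T)\chi_T$, $\chi_T(x)=\prod_{i\in T}x_i$. MRF neighborhood of $u$: all $i\ne u$ with $\hat f(T)\ne0$ for some $T\ni u,i$. $D$: maximum size of an MRF neighborhood; $\gamma=\max_u\sum_{T\ni u}|\hat f(T)|$. $\sigma(t)=1/(1+e^{-t})$. Regression at $u$: the feature vector is $z_u=(\chi_T(X))_{T\subseteq n(u)}\in\{-1,1\}^{2^{|n(u)|}}$ and the label is $y=X_u$. Given samples $(z^{(k)},y^{(k)})_{k=1}^M$ computed from the $M$ samples of $X$, let $\hat w_u\in\arg\min\{\frac1M\sum_{k=1}^M\ln(1+e^{-y^{(k)}(w\cdot z^{(k)})}) : w\in\mathbb{R}^{2^{|n(u)|}},\ \|w\|_1\le2\gamma\}$. *)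

theory Defs
  imports "HOL-Analysis.Analysis"
begin

text \<open>Observed variables are indexed by {0..<n}, latent ones by {0..<m}.
  A configuration is a real-valued function with values in {-1,1} on the index set
  and 0 outside (so the set of configurations is finite).\<close>

definition cube :: "nat \<Rightarrow> (nat \<Rightarrow> real) set" where
  "cube n = {x. (\<forall>i<n. x i \<in> {-1, 1}) \<and> (\<forall>i. n \<le> i \<longrightarrow> x i = 0)}"

definition chi :: "nat set \<Rightarrow> (nat \<Rightarrow> real) \<Rightarrow> real" where
  "chi T x = (\<Prod>i\<in>T. x i)"

definition rbm_weight ::
  "nat \<Rightarrow> nat \<Rightarrow> (nat \<Rightarrow> nat \<Rightarrow> real) \<Rightarrow> (nat \<Rightarrow> real) \<Rightarrow> (nat \<Rightarrow> real)
     \<Rightarrow> (nat \<Rightarrow> real) \<Rightarrow> (nat \<Rightarrow> real) \<Rightarrow> real" where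
  "rbm_weight n m J h g x y =
     exp ((\<Sum>i<n. \<Sum>j<m. x i * J i j * y j) + (\<Sum>i<n. h i * x i) + (\<Sum>j<m. g j * y j))"

definition rbm_Z :: "nat \<Rightarrow> nat \<Rightarrow> (nat \<Rightarrow> nat \<Rightarrow> real) \<Rightarrow> (nat \<Rightarrow> real) \<Rightarrow> (nat \<Rightarrow> real) \<Rightarrow> real" where
  "rbm_Z n m J h g = (\<Sum>x\<in>cube n. \<Sum>y\<in>cube m. rbm_weight n m J h g x y)"

definition rbm_marg ::
  "nat \<Rightarrow> nat \<Rightarrow> (nat \<Rightarrow> nat \<Rightarrow> real) \<Rightarrow> (nat \<Rightarrow> real) \<Rightarrow> (nat \<Rightarrow> real) \<Rightarrow> (nat \<Rightarrow> real) \<Rightarrow> real" where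
  "rbm_marg n m J h g x = (\<Sum>y\<in>cube m. rbm_weight n m J h g x y) / rbm_Z n m J h g"

definition rbm_cond ::
  "nat \<Rightarrow> nat \<Rightarrow> (nat \<Rightarrow> nat \<Rightarrow> real) \<Rightarrow> (nat \<Rightarrow> real) \<Rightarrow> (nat \<Rightarrow> real) \<Rightarrow> nat \<Rightarrow> (nat \<Rightarrow> real) \<Rightarrow> real" where
  "rbm_cond n m J h g u x =
     rbm_marg n m J h g (x(u := 1)) /
       (rbm_marg n m J h g (x(u := 1)) + rbm_marg n m J h g (x(u := -1)))"

definition rho :: "real \<Rightarrow> real" where
  "rho t = ln (exp t + exp (- t))"

definition sigmoid :: "real \<Rightarrow> real" where
  "sigmoid t = 1 / (1 + exp (- t))"

definition rbm_f ::
  "nat \<Rightarrow> nat \<Rightarrow> (nat \<Rightarrow> nat \<Rightarrow> real) \<Rightarrow> (nat \<Rightarrow> real) \<Rightarrow> (nat \<Rightarrow> real) \<Rightarrow> (nat \<Rightarrow> real) \<Rightarrow> real" where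
  "rbm_f n m J h g x = (\<Sum>j<m. rho ((\<Sum>i<n. J i j * x i) + g j)) + (\<Sum>i<n. h i * x i)"

definition fhat ::
  "nat \<Rightarrow> nat \<Rightarrow> (nat \<Rightarrow> nat \<Rightarrow> real) \<Rightarrow> (nat \<Rightarrow> real) \<Rightarrow> (nat \<Rightarrow> real) \<Rightarrow> nat set \<Rightarrow> real" where
  "fhat n m J h g T = (\<Sum>x\<in>cube n. rbm_f n m J h g x * chi T x) / 2 ^ n"

definition mrf_nbhd ::
  "nat \<Rightarrow> nat \<Rightarrow> (nat \<Rightarrow> nat \<Rightarrow> real) \<Rightarrow> (nat \<Rightarrow> real) \<Rightarrow> (nat \<Rightarrow> real) \<Rightarrow> nat \<Rightarrow> nat set" where
  "mrf_nbhd n m J h g u =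
     {i. i < n \<and> i \<noteq> u \<and> (\<exists>T. T \<subseteq> {0..<n} \<and> u \<in> T \<and> i \<in> T \<and> fhat n m J h g T \<noteq> 0)}"

definition rbm_D ::
  "nat \<Rightarrow> nat \<Rightarrow> (nat \<Rightarrow> nat \<Rightarrow> real) \<Rightarrow> (nat \<Rightarrow> real) \<Rightarrow> (nat \<Rightarrow> real) \<Rightarrow> nat" where
  "rbm_D n m J h g = Max (insert 0 ((\<lambda>u. card (mrf_nbhd n m J h g u)) ` {0..<n}))"

definition rbm_gamma ::
  "nat \<Rightarrow> nat \<Rightarrow> (nat \<Rightarrow> nat \<Rightarrow> real) \<Rightarrow> (nat \<Rightarrow> real) \<Rightarrow> (nat \<Rightarrow> real) \<Rightarrow> real" where
  "rbm_gamma n m J h g =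
     Max (insert 0 ((\<lambda>u. \<Sum>T\<in>{T. T \<subseteq> {0..<n} \<and> u \<in> T}. \<bar>fhat n m J h g T\<bar>) ` {0..<n}))"

definition rbm_d :: "nat \<Rightarrow> nat \<Rightarrow> (nat \<Rightarrow> nat \<Rightarrow> real) \<Rightarrow> nat" where
  "rbm_d n m J = Max (insert 0 ((\<lambda>j. card {i. i < n \<and> J i j \<noteq> 0}) ` {0..<m}))"

text \<open>Inner product w . z_u(x) where z_u(x) = (chi_T(x))_{T subset of nu}.\<close>
definition feat_dot :: "nat set \<Rightarrow> (nat set \<Rightarrow> real) \<Rightarrow> (nat \<Rightarrow> real) \<Rightarrow> real" where
  "feat_dot nu w x = (\<Sum>T\<in>Pow nu. w T * chi T x)"

definition l1norm :: "nat set \<Rightarrow> (nat set \<Rightarrow> real) \<Rightarrow> real" where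
  "l1norm nu w = (\<Sum>T\<in>Pow nu. \<bar>w T\<bar>)"

definition logistic_loss ::
  "nat \<Rightarrow> (nat \<Rightarrow> nat \<Rightarrow> real) \<Rightarrow> nat \<Rightarrow> nat set \<Rightarrow> (nat set \<Rightarrow> real) \<Rightarrow> real" where
  "logistic_loss M s u nu w =
     (1 / real M) * (\<Sum>k<M. ln (1 + exp (- (s k u * feat_dot nu w (s k)))))"

end

theory Submission
  imports Defs "HOL-Probability.Hoeffding"
begin

definition pwt :: "('a \<Rightarrow> real) \<Rightarrow> nat \<Rightarrow> (nat \<Rightarrow> 'a) \<Rightarrow> real" where
  "pwt p M s = (\<Prod>k<M. p (s k))"

lemma sum_PiE_prod:
  assumes "finite \<Omega>"
  shows "(\<Sum>s\<in>PiE {..<M} (\<lambda>_. \<Omega>). \<Prod>k<M. (f::nat \<Rightarrow> _ \<Rightarrow> real) k (s k)) = (\<Prod>k<M. \<Sum>x\<in>\<Omega>. f k x)"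
  using prod_sum_PiE[of "{..<M}" "\<lambda>_. \<Omega>" f] assms by simp

lemma pwt_sum1:
  assumes "finite \<Omega>" "sum p \<Omega> = 1"
  shows "(\<Sum>s\<in>PiE {..<M} (\<lambda>_. \<Omega>). pwt p M s) = 1"
  unfolding pwt_def using sum_PiE_prod[OF assms(1), where M=M and f="\<lambda>_. p"] assms by simp

lemma pwt_nonneg:
  assumes "\<forall>x\<in>\<Omega>. p x \<ge> 0" "s \<in> PiE {..<M} (\<lambda>_. \<Omega>)"
  shows "pwt p M s \<ge> 0"
  unfolding pwt_def using assms by (intro prod_nonneg) (auto simp: PiE_def Pi_def)

lemma pwt_marg:
  assumes "finite \<Omega>" "sum p \<Omega> = 1" "k < M"
  shows "(\<Sum>s\<in>PiE {..<M} (\<lambda>_. \<Omega>). pwt p M s * g (s k)) = (\<Sum>x\<in>\<Omega>. p x * g x)"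
proof -
  define f where "f = (\<lambda>i x. if i = k then p x * g x else p x)"
  have "\<And>s. pwt p M s * g (s k) = (\<Prod>i<M. f i (s i))"
  proof -
    fix s
    have "(\<Prod>i<M. f i (s i)) = f k (s k) * (\<Prod>i\<in>{..<M}-{k}. f i (s i))"
      using assms(3) by (subst prod.remove[of _ k]) auto
    also have "(\<Prod>i\<in>{..<M}-{k}. f i (s i)) = (\<Prod>i\<in>{..<M}-{k}. p (s i))"
      by (rule prod.cong) (auto simp: f_def)
    also have "pwt p M s = p (s k) * (\<Prod>i\<in>{..<M}-{k}. p (s i))"
      unfolding pwt_def using assms(3) by (subst prod.remove[of _ k]) auto
    ultimately show "pwt p M s * g (s k) = (\<Prod>i<M. f i (s i))"
      by (simp add: f_def)
  qed
  hence "(\<Sum>s\<in>PiE {..<M} (\<lambda>_. \<Omega>). pwt p M s * g (s k)) = (\<Prod>i<M. \<Sum>x\<in>\<Omega>. f i x)"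
    using sum_PiE_prod[OF assms(1)] by simp
  also have "\<dots> = (\<Sum>x\<in>\<Omega>. f k x) * (\<Prod>i\<in>{..<M}-{k}. \<Sum>x\<in>\<Omega>. f i x)"
    using assms(3) by (subst prod.remove[of _ k]) auto
  also have "(\<Prod>i\<in>{..<M}-{k}. \<Sum>x\<in>\<Omega>. f i x) = 1"
    using assms(2) by (intro prod.neutral) (auto simp: f_def)
  finally show ?thesis by (simp add: f_def)
qed

lemma finite_PiE_lessThan: "finite \<Omega> \<Longrightarrow> finite (PiE {..<(M::nat)} (\<lambda>_. \<Omega>))"
  by (simp add: finite_PiE)

lemma exp_add_le: "exp (a + b) \<le> (exp (2*a) + exp (2*b)) / (2::real)"
proof -
  have "0 \<le> (exp a - exp b)^2" by simp
  hence "2 * (exp a * exp b) \<le> exp a ^2 + exp b ^ 2" by (simp add: power2_eq_square algebra_simps)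
  moreover have "exp a ^2 = exp (2*a)" "exp b ^2 = exp (2*b)"
    by (simp_all add: power2_eq_square exp_add[symmetric])
  ultimately show ?thesis by (simp add: exp_add)
qed

lemma cosh_le: "(exp (x::real) + exp (-x)) / 2 \<le> exp (x^2/2)"
proof -
  have key: "(exp y + exp (-y)) / 2 \<le> exp (y^2/2)" if "y \<ge> 0" for y :: real
  proof -
    have h1: "-(2*y) * (1/2) + ln (1 + (1/2) * (exp (2*y) - 1)) \<le> (2*y)^2/8"
      using Hoeffdings_lemma_aux[of "2*y" "1/2"] that by simp
    have eq: "1 + (1/2) * (exp (2*y) - 1) = exp y * ((exp y + exp (-y)) / 2)"
      by (simp add: field_simps exp_add[symmetric] exp_minus) 
    have pos: "(exp y + exp (-y)) / 2 > 0" by (auto intro: add_pos_pos)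
    have "ln (1 + (1/2) * (exp (2*y) - 1)) = y + ln ((exp y + exp (-y)) / 2)"
      unfolding eq using pos ln_mult[of "exp y" "(exp y + exp (-y)) / 2"] by simp
    with h1 have "ln ((exp y + exp (-y)) / 2) \<le> y^2/2"
      by (simp add: power2_eq_square)
    moreover have "(exp y + exp (-y)) / 2 > 0" by (auto intro: add_pos_pos)
    ultimately show ?thesis by (metis exp_le_cancel_iff exp_ln)
  qed
  show ?thesis
  proof (cases "x \<ge> 0")
    case True thus ?thesis using key by blast
  next
    case False thus ?thesis using key[of "-x"] by (simp add: add.commute)
  qed
qed


lemma MAX_attained:
  assumes "finite W" "W \<noteq> {}"
  obtains w0 where "w0 \<in> W" "(MAX w\<in>W. (f w::real)) = f w0"
proof -
  have "(MAX w\<in>W. f w) \<in> f ` W" using assms by (intro Max_in) auto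
  thus ?thesis using that by auto
qed

lemma MAX_ge: "finite W \<Longrightarrow> w \<in> W \<Longrightarrow> (f w::real) \<le> (MAX w\<in>W. f w)"
  by (intro Max_ge) auto

lemma sym_step1:
  fixes \<Omega> :: "'a set" and h :: "'w \<Rightarrow> 'a \<Rightarrow> real"
  assumes fin: "finite \<Omega>" and pnn: "\<forall>x\<in>\<Omega>. p x \<ge> 0" and p1: "sum p \<Omega> = 1"
    and W: "finite W" "W \<noteq> {}" and M: "M > 0" and lam: "lam \<ge> 0"
    and s: "s \<in> PiE {..<M} (\<lambda>_. \<Omega>)"
  shows "exp (lam * (MAX w\<in>W. (\<Sum>x\<in>\<Omega>. p x * h w x) - (1/real M) * (\<Sum>k<M. h w (s k))))
     \<le> (\<Sum>s'\<in>PiE {..<M} (\<lambda>_. \<Omega>). pwt p M s' *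
            exp (lam * (MAX w\<in>W. (1/real M) * (\<Sum>k<M. h w (s' k) - h w (s k)))))"
proof -
  define PS where "PS = PiE {..<M} (\<lambda>_. \<Omega>)"
  have finPS: "finite PS" unfolding PS_def using fin by (rule finite_PiE_lessThan)
  have PSne: "PS \<noteq> {}" unfolding PS_def using s by auto
  have pw0: "\<And>s'. s' \<in> PS \<Longrightarrow> pwt p M s' \<ge> 0" unfolding PS_def using pnn pwt_nonneg by blast
  have pw1: "(\<Sum>s'\<in>PS. pwt p M s') = 1" unfolding PS_def by (rule pwt_sum1[OF fin p1])
  define D where "D = (\<lambda>s'. MAX w\<in>W. (1/real M) * (\<Sum>k<M. h w (s' k) - h w (s k)))"
  obtain w0 where w0: "w0 \<in> W" and
    mx: "(MAX w\<in>W. (\<Sum>x\<in>\<Omega>. p x * h w x) - (1/real M) * (\<Sum>k<M. h w (s k)))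
        = (\<Sum>x\<in>\<Omega>. p x * h w0 x) - (1/real M) * (\<Sum>k<M. h w0 (s k))"
    using MAX_attained[OF W, of "\<lambda>w. (\<Sum>x\<in>\<Omega>. p x * h w x) - (1/real M) * (\<Sum>k<M. h w (s k))"] by blast
  have E: "(\<Sum>x\<in>\<Omega>. p x * h w0 x) = (\<Sum>s'\<in>PS. pwt p M s' * ((1/real M) * (\<Sum>k<M. h w0 (s' k))))"
  proof -
    have "(\<Sum>s'\<in>PS. pwt p M s' * ((1/real M) * (\<Sum>k<M. h w0 (s' k))))
        = (1/real M) * (\<Sum>k<M. \<Sum>s'\<in>PS. pwt p M s' * h w0 (s' k))"
    proof -
      have "\<And>s'. pwt p M s' * ((1/real M) * (\<Sum>k<M. h w0 (s' k))) = (1/real M) * (\<Sum>k<M. pwt p M s' * h w0 (s' k))"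
        by (simp add: sum_distrib_left mult_ac)
      hence "(\<Sum>s'\<in>PS. pwt p M s' * ((1/real M) * (\<Sum>k<M. h w0 (s' k))))
          = (1/real M) * (\<Sum>s'\<in>PS. \<Sum>k<M. pwt p M s' * h w0 (s' k))"
        by (simp add: sum_distrib_left)
      also have "(\<Sum>s'\<in>PS. \<Sum>k<M. pwt p M s' * h w0 (s' k)) = (\<Sum>k<M. \<Sum>s'\<in>PS. pwt p M s' * h w0 (s' k))"
        by (rule sum.swap)
      finally show ?thesis .
    qed
    also have "\<dots> = (1/real M) * (\<Sum>k<M. \<Sum>x\<in>\<Omega>. p x * h w0 x)"
      unfolding PS_def using pwt_marg[OF fin p1, of _ M "h w0"] by (intro arg_cong[where f="\<lambda>x. (1/real M) * x"] sum.cong) auto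
    also have "\<dots> = (\<Sum>x\<in>\<Omega>. p x * h w0 x)" using M by simp
    finally show ?thesis by simp
  qed
  define cc where "cc = (1/real M) * (\<Sum>k<M. h w0 (s k))"
  have C: "cc = (\<Sum>s'\<in>PS. pwt p M s' * cc)"
    by (simp add: sum_distrib_right[symmetric] pw1)
  have "(\<Sum>x\<in>\<Omega>. p x * h w0 x) - (1/real M) * (\<Sum>k<M. h w0 (s k))
      = (\<Sum>s'\<in>PS. pwt p M s' * ((1/real M) * (\<Sum>k<M. h w0 (s' k)))) - (\<Sum>s'\<in>PS. pwt p M s' * cc)"
    using E C cc_def by metis
  also have "\<dots> = (\<Sum>s'\<in>PS. pwt p M s' * ((1/real M) * (\<Sum>k<M. h w0 (s' k) - h w0 (s k))))"
    unfolding cc_def sum_subtractf[symmetric] by (intro sum.cong) (auto simp: sum_subtractf algebra_simps)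
  also have "\<dots> \<le> (\<Sum>s'\<in>PS. pwt p M s' * D s')"
    unfolding D_def by (intro sum_mono mult_left_mono pw0 MAX_ge[OF W(1) w0])
  finally have le0: "(MAX w\<in>W. (\<Sum>x\<in>\<Omega>. p x * h w x) - (1/real M) * (\<Sum>k<M. h w (s k)))
       \<le> (\<Sum>s'\<in>PS. pwt p M s' * D s')" unfolding mx .
  have le: "lam * (MAX w\<in>W. (\<Sum>x\<in>\<Omega>. p x * h w x) - (1/real M) * (\<Sum>k<M. h w (s k)))
       \<le> (\<Sum>s'\<in>PS. pwt p M s' *\<^sub>R (lam * D s'))"
  proof -
    have "lam * (MAX w\<in>W. (\<Sum>x\<in>\<Omega>. p x * h w x) - (1/real M) * (\<Sum>k<M. h w (s k)))
       \<le> lam * (\<Sum>s'\<in>PS. pwt p M s' * D s')" using le0 lam by (rule mult_left_mono)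
    also have "\<dots> = (\<Sum>s'\<in>PS. pwt p M s' *\<^sub>R (lam * D s'))" by (simp add: sum_distrib_left mult_ac)
    finally show ?thesis .
  qed
  have cvx: "convex_on UNIV exp" using convex_on_exp[of 1] by simp
  have "exp (\<Sum>s'\<in>PS. pwt p M s' *\<^sub>R (lam * D s')) \<le> (\<Sum>s'\<in>PS. pwt p M s' * exp (lam * D s'))"
    by (rule convex_on_sum[OF finPS PSne cvx pw1 pw0]) auto
  with le show ?thesis unfolding PS_def D_def by (meson exp_le_cancel_iff order_trans)
qed

definition sw :: "(nat \<Rightarrow> real) \<Rightarrow> (nat \<Rightarrow> 'a) \<times> (nat \<Rightarrow> 'a) \<Rightarrow> (nat \<Rightarrow> 'a) \<times> (nat \<Rightarrow> 'a)" where
  "sw \<sigma> x = ((\<lambda>k. if \<sigma> k = 1 then fst x k else snd x k), (\<lambda>k. if \<sigma> k = 1 then snd x k else fst x k))"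

lemma sw_sw: "sw \<sigma> (sw \<sigma> x) = x"
  unfolding sw_def by (cases x) auto

lemma sw_in: "x \<in> PiE I A \<times> PiE I A \<Longrightarrow> sw \<sigma> x \<in> PiE I A \<times> PiE I A"
  unfolding sw_def by (cases x) (auto simp: PiE_def Pi_def extensional_def)

lemma sw_pwt: "pwt p M (fst (sw \<sigma> x)) * pwt p M (snd (sw \<sigma> x)) = pwt p M (fst x) * pwt p M (snd x)"
  unfolding pwt_def sw_def prod.distrib[symmetric] by (intro prod.cong) auto

lemma swap_sum:
  "(\<Sum>x\<in>PiE I A \<times> PiE I A. pwt p M (fst x) * pwt p M (snd x) * G x)
   = (\<Sum>x\<in>PiE I A \<times> PiE I A. pwt p M (fst x) * pwt p M (snd x) * G (sw \<sigma> x))"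
  by (rule sum.reindex_bij_witness[of _ "sw \<sigma>" "sw \<sigma>"]) (auto simp: sw_sw sw_in sw_pwt)

definition negs :: "nat \<Rightarrow> (nat \<Rightarrow> real) \<Rightarrow> (nat \<Rightarrow> real)" where
  "negs M \<sigma> = (\<lambda>k. if k < M then - \<sigma> k else undefined)"

lemma negs_in: "\<sigma> \<in> PiE {..<M} (\<lambda>_. {-1,1::real}) \<Longrightarrow> negs M \<sigma> \<in> PiE {..<M} (\<lambda>_. {-1,1::real})"
  unfolding negs_def by (auto simp: PiE_def Pi_def extensional_def)

lemma negs_negs: "\<sigma> \<in> PiE {..<M} (\<lambda>_. {-1,1::real}) \<Longrightarrow> negs M (negs M \<sigma>) = \<sigma>"
  unfolding negs_def by (auto simp: PiE_def extensional_def)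

lemma sum_negs: "(\<Sum>\<sigma>\<in>PiE {..<M} (\<lambda>_. {-1,1::real}). F (negs M \<sigma>)) = (\<Sum>\<sigma>\<in>PiE {..<M} (\<lambda>_. {-1,1::real}). F \<sigma>)"
  by (rule sum.reindex_bij_witness[of _ "negs M" "negs M"]) (auto simp: negs_in negs_negs)

lemma card_RS: "card (PiE {..<M} (\<lambda>_. {-1,1::real})) = 2^M"
proof -
  have "card (PiE {..<M} (\<lambda>_. {-1,1::real})) = (\<Prod>i\<in>{..<M}. card {-1,1::real})" by (rule card_PiE) simp
  also have "card {-1,1::real} = 2" by simp
  finally show ?thesis by simp
qed

lemma sum_pair_snd:
  assumes "finite \<Omega>" "sum p \<Omega> = 1"
  shows "(\<Sum>x\<in>PiE {..<M} (\<lambda>_. \<Omega>) \<times> PiE {..<M} (\<lambda>_. \<Omega>). pwt p M (fst x) * pwt p M (snd x) * g (snd x))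
       = (\<Sum>s\<in>PiE {..<M} (\<lambda>_. \<Omega>). pwt p M s * g s)"
proof -
  have "(\<Sum>x\<in>PiE {..<M} (\<lambda>_. \<Omega>) \<times> PiE {..<M} (\<lambda>_. \<Omega>). pwt p M (fst x) * pwt p M (snd x) * g (snd x))
      = (\<Sum>s\<in>PiE {..<M} (\<lambda>_. \<Omega>). \<Sum>s'\<in>PiE {..<M} (\<lambda>_. \<Omega>). pwt p M s * (pwt p M s' * g s'))"
    by (simp add: sum.cartesian_product mult.assoc split_beta)
  also have "\<dots> = (\<Sum>s\<in>PiE {..<M} (\<lambda>_. \<Omega>). pwt p M s) * (\<Sum>s'\<in>PiE {..<M} (\<lambda>_. \<Omega>). pwt p M s' * g s')"
    by (simp add: sum_product)
  finally show ?thesis using pwt_sum1[OF assms] by simp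
qed

lemma sum_pair_fst:
  assumes "finite \<Omega>" "sum p \<Omega> = 1"
  shows "(\<Sum>x\<in>PiE {..<M} (\<lambda>_. \<Omega>) \<times> PiE {..<M} (\<lambda>_. \<Omega>). pwt p M (fst x) * pwt p M (snd x) * g (fst x))
       = (\<Sum>s\<in>PiE {..<M} (\<lambda>_. \<Omega>). pwt p M s * g s)"
proof -
  have "(\<Sum>x\<in>PiE {..<M} (\<lambda>_. \<Omega>) \<times> PiE {..<M} (\<lambda>_. \<Omega>). pwt p M (fst x) * pwt p M (snd x) * g (fst x))
      = (\<Sum>s\<in>PiE {..<M} (\<lambda>_. \<Omega>). \<Sum>s'\<in>PiE {..<M} (\<lambda>_. \<Omega>). (pwt p M s * g s) * pwt p M s')"
    by (simp add: sum.cartesian_product mult_ac split_beta)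
  also have "\<dots> = (\<Sum>s\<in>PiE {..<M} (\<lambda>_. \<Omega>). pwt p M s * g s) * (\<Sum>s'\<in>PiE {..<M} (\<lambda>_. \<Omega>). pwt p M s')"
    by (simp add: sum_product)
  finally show ?thesis using pwt_sum1[OF assms] by simp
qed

lemma symmetrization:
  fixes \<Omega> :: "'a set" and h :: "'w \<Rightarrow> 'a \<Rightarrow> real"
  assumes fin: "finite \<Omega>" and pnn: "\<forall>x\<in>\<Omega>. p x \<ge> 0" and p1: "sum p \<Omega> = 1"
    and W: "finite W" "W \<noteq> {}" and M: "M > 0" and lam: "lam \<ge> 0"
  shows "(\<Sum>s\<in>PiE {..<M} (\<lambda>_. \<Omega>). pwt p M s *
            exp (lam * (MAX w\<in>W. (\<Sum>x\<in>\<Omega>. p x * h w x) - (1/real M) * (\<Sum>k<M. h w (s k)))))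
     \<le> (1/2^M) * (\<Sum>\<sigma>\<in>PiE {..<M} (\<lambda>_. {-1,1::real}). \<Sum>s\<in>PiE {..<M} (\<lambda>_. \<Omega>). pwt p M s *
            exp (2 * lam * (MAX w\<in>W. (1/real M) * (\<Sum>k<M. \<sigma> k * h w (s k)))))"
proof -
  define PS where "PS = PiE {..<M} (\<lambda>_. \<Omega>)"
  define RS where "RS = PiE {..<M} (\<lambda>_. {-1,1::real})"
  define D where "D = (\<lambda>x::(nat \<Rightarrow> 'a) \<times> (nat \<Rightarrow> 'a). MAX w\<in>W. (1/real M) * (\<Sum>k<M. h w (snd x k) - h w (fst x k)))"
  define A where "A = (\<lambda>\<sigma> s. MAX w\<in>W. (1/real M) * (\<Sum>k<M. \<sigma> k * h w (s k)))"
  define Q where "Q = (\<lambda>x::(nat \<Rightarrow> 'a) \<times> (nat \<Rightarrow> 'a). pwt p M (fst x) * pwt p M (snd x))"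
  have pw0: "\<And>s. s \<in> PS \<Longrightarrow> pwt p M s \<ge> 0" unfolding PS_def using pnn pwt_nonneg by blast
  have Q0: "\<And>x. x \<in> PS \<times> PS \<Longrightarrow> Q x \<ge> 0" unfolding Q_def using pw0 by (auto intro: mult_nonneg_nonneg)
  have step1: "(\<Sum>s\<in>PS. pwt p M s * exp (lam * (MAX w\<in>W. (\<Sum>x\<in>\<Omega>. p x * h w x) - (1/real M) * (\<Sum>k<M. h w (s k)))))
     \<le> (\<Sum>s\<in>PS. pwt p M s * (\<Sum>s'\<in>PS. pwt p M s' * exp (lam * D (s, s'))))"
  proof (intro sum_mono mult_left_mono)
    fix s assume s: "s \<in> PS"
    show "0 \<le> pwt p M s" using pw0[OF s] .
    show "exp (lam * (MAX w\<in>W. (\<Sum>x\<in>\<Omega>. p x * h w x) - (1/real M) * (\<Sum>k<M. h w (s k))))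
        \<le> (\<Sum>s'\<in>PS. pwt p M s' * exp (lam * D (s, s')))"
      using sym_step1[OF fin pnn p1 W M lam, where s=s and h=h] s unfolding D_def PS_def by simp
  qed
  also have "\<dots> = (\<Sum>x\<in>PS \<times> PS. Q x * exp (lam * D x))"
    unfolding Q_def by (simp add: sum.cartesian_product sum_distrib_left mult.assoc split_beta)
  also have "\<dots> = (1/2^M) * (\<Sum>\<sigma>\<in>RS. \<Sum>x\<in>PS \<times> PS. Q x * exp (lam * D (sw \<sigma> x)))"
  proof -
    have "\<And>\<sigma>. (\<Sum>x\<in>PS \<times> PS. Q x * exp (lam * D x)) = (\<Sum>x\<in>PS \<times> PS. Q x * exp (lam * D (sw \<sigma> x)))"
      unfolding Q_def PS_def by (rule swap_sum)
    hence "(\<Sum>\<sigma>\<in>RS. \<Sum>x\<in>PS \<times> PS. Q x * exp (lam * D (sw \<sigma> x))) = 2^M * (\<Sum>x\<in>PS \<times> PS. Q x * exp (lam * D x))"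
      by (simp add: RS_def card_RS)
    thus ?thesis by simp
  qed
  also have "\<dots> \<le> (1/2^M) * (\<Sum>\<sigma>\<in>RS. \<Sum>x\<in>PS \<times> PS. Q x * ((exp (2*lam * A \<sigma> (snd x)) + exp (2*lam * A (negs M \<sigma>) (fst x))) / 2))"
  proof -
    have "Q x * exp (lam * D (sw \<sigma> x)) \<le> Q x * ((exp (2*lam * A \<sigma> (snd x)) + exp (2*lam * A (negs M \<sigma>) (fst x))) / 2)"
      if x: "x \<in> PS \<times> PS" and \<sigma>: "\<sigma> \<in> RS" for x \<sigma>
    proof (rule mult_left_mono[OF _ Q0[OF x]])
      obtain w0 where w0: "w0 \<in> W" and
        mx: "D (sw \<sigma> x) = (1/real M) * (\<Sum>k<M. h w0 (snd (sw \<sigma> x) k) - h w0 (fst (sw \<sigma> x) k))"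
        unfolding D_def using MAX_attained[OF W, of "\<lambda>w. (1/real M) * (\<Sum>k<M. h w (snd (sw \<sigma> x) k) - h w (fst (sw \<sigma> x) k))"] by blast
      have "(\<Sum>k<M. h w0 (snd (sw \<sigma> x) k) - h w0 (fst (sw \<sigma> x) k))
          = (\<Sum>k<M. \<sigma> k * h w0 (snd x k)) + (\<Sum>k<M. negs M \<sigma> k * h w0 (fst x k))"
      proof -
        have "h w0 (snd (sw \<sigma> x) k) - h w0 (fst (sw \<sigma> x) k) = \<sigma> k * h w0 (snd x k) + negs M \<sigma> k * h w0 (fst x k)"
          if "k < M" for k
        proof -
          have "\<sigma> k \<in> {-1,1}" using \<sigma> that unfolding RS_def by auto
          thus ?thesis using that unfolding sw_def negs_def by auto
        qed
        thus ?thesis by (simp add: sum.distrib[symmetric])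
      qed
      hence "D (sw \<sigma> x) = (1/real M) * (\<Sum>k<M. \<sigma> k * h w0 (snd x k)) + (1/real M) * (\<Sum>k<M. negs M \<sigma> k * h w0 (fst x k))"
        unfolding mx by (simp add: algebra_simps)
      also have "\<dots> \<le> A \<sigma> (snd x) + A (negs M \<sigma>) (fst x)"
        unfolding A_def by (intro add_mono MAX_ge[OF W(1) w0])
      finally have "lam * D (sw \<sigma> x) \<le> lam * (A \<sigma> (snd x) + A (negs M \<sigma>) (fst x))"
        using lam by (rule mult_left_mono)
      hence "lam * D (sw \<sigma> x) \<le> lam * A \<sigma> (snd x) + lam * A (negs M \<sigma>) (fst x)"
        by (simp only: distrib_left)
      hence "exp (lam * D (sw \<sigma> x)) \<le> exp (lam * A \<sigma> (snd x) + lam * A (negs M \<sigma>) (fst x))" by simp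
      also have "\<dots> \<le> (exp (2*(lam * A \<sigma> (snd x))) + exp (2*(lam * A (negs M \<sigma>) (fst x)))) / 2"
        by (rule exp_add_le)
      finally show "exp (lam * D (sw \<sigma> x)) \<le> (exp (2*lam * A \<sigma> (snd x)) + exp (2*lam * A (negs M \<sigma>) (fst x))) / 2"
        by (simp add: mult.assoc)
    qed
    hence "\<And>\<sigma>. \<sigma> \<in> RS \<Longrightarrow> (\<Sum>x\<in>PS \<times> PS. Q x * exp (lam * D (sw \<sigma> x)))
        \<le> (\<Sum>x\<in>PS \<times> PS. Q x * ((exp (2*lam * A \<sigma> (snd x)) + exp (2*lam * A (negs M \<sigma>) (fst x))) / 2))"
      by (intro sum_mono) blast
    hence "(\<Sum>\<sigma>\<in>RS. \<Sum>x\<in>PS \<times> PS. Q x * exp (lam * D (sw \<sigma> x)))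
        \<le> (\<Sum>\<sigma>\<in>RS. \<Sum>x\<in>PS \<times> PS. Q x * ((exp (2*lam * A \<sigma> (snd x)) + exp (2*lam * A (negs M \<sigma>) (fst x))) / 2))"
      by (rule sum_mono)
    thus ?thesis by (rule mult_left_mono) simp
  qed
  also have "\<dots> = (1/2^M) * ((1/2) * (\<Sum>\<sigma>\<in>RS. \<Sum>s\<in>PS. pwt p M s * exp (2*lam * A \<sigma> s))
                     + (1/2) * (\<Sum>\<sigma>\<in>RS. \<Sum>s\<in>PS. pwt p M s * exp (2*lam * A (negs M \<sigma>) s)))"
  proof -
    have "\<And>\<sigma>. (\<Sum>x\<in>PS \<times> PS. Q x * ((exp (2*lam * A \<sigma> (snd x)) + exp (2*lam * A (negs M \<sigma>) (fst x))) / 2))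
       = (1/2) * (\<Sum>x\<in>PS \<times> PS. Q x * exp (2*lam * A \<sigma> (snd x))) + (1/2) * (\<Sum>x\<in>PS \<times> PS. Q x * exp (2*lam * A (negs M \<sigma>) (fst x)))"
    proof -
      fix \<sigma>
      have "\<And>x. Q x * ((exp (2*lam * A \<sigma> (snd x)) + exp (2*lam * A (negs M \<sigma>) (fst x))) / 2)
          = (1/2) * (Q x * exp (2*lam * A \<sigma> (snd x))) + (1/2) * (Q x * exp (2*lam * A (negs M \<sigma>) (fst x)))"
        by (simp add: field_simps)
      note pt = this
      show "(\<Sum>x\<in>PS \<times> PS. Q x * ((exp (2*lam * A \<sigma> (snd x)) + exp (2*lam * A (negs M \<sigma>) (fst x))) / 2))
       = (1/2) * (\<Sum>x\<in>PS \<times> PS. Q x * exp (2*lam * A \<sigma> (snd x))) + (1/2) * (\<Sum>x\<in>PS \<times> PS. Q x * exp (2*lam * A (negs M \<sigma>) (fst x)))"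
        by (simp only: pt sum.distrib sum_distrib_left)
    qed
    moreover have "\<And>\<sigma>. (\<Sum>x\<in>PS \<times> PS. Q x * exp (2*lam * A \<sigma> (snd x))) = (\<Sum>s\<in>PS. pwt p M s * exp (2*lam * A \<sigma> s))"
      unfolding Q_def PS_def by (rule sum_pair_snd[OF fin p1])
    moreover have "\<And>\<sigma>. (\<Sum>x\<in>PS \<times> PS. Q x * exp (2*lam * A (negs M \<sigma>) (fst x))) = (\<Sum>s\<in>PS. pwt p M s * exp (2*lam * A (negs M \<sigma>) s))"
      unfolding Q_def PS_def by (rule sum_pair_fst[OF fin p1])
    ultimately show ?thesis by (simp add: sum.distrib sum_distrib_left)
  qed
  also have "(\<Sum>\<sigma>\<in>RS. \<Sum>s\<in>PS. pwt p M s * exp (2*lam * A (negs M \<sigma>) s)) = (\<Sum>\<sigma>\<in>RS. \<Sum>s\<in>PS. pwt p M s * exp (2*lam * A \<sigma> s))"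
    unfolding RS_def by (rule sum_negs)
  finally show ?thesis unfolding PS_def RS_def A_def by simp
qed


lemma MAX_attained':
  assumes "finite W" "W \<noteq> {}"
  obtains w0 where "w0 \<in> W" "(MAX w\<in>W. (f w::real)) = f w0"
proof -
  have "(MAX w\<in>W. f w) \<in> f ` W" using assms by (intro Max_in) auto
  thus ?thesis using that by auto
qed

lemma MAX_ge': "finite W \<Longrightarrow> w \<in> W \<Longrightarrow> (f w::real) \<le> (MAX w\<in>W. f w)"
  by (intro Max_ge) auto

lemma inc_exp:
  assumes "(c::real) \<ge> 0" "x \<le> y" "d \<ge> 0"
  shows "exp (c*(x+d)) - exp (c*x) \<le> exp (c*(y+d)) - exp (c*y)"
proof -
  have "exp (c*(x+d)) - exp (c*x) = exp (c*x) * (exp (c*d) - 1)" by (simp add: algebra_simps exp_add)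
  also have "\<dots> \<le> exp (c*y) * (exp (c*d) - 1)"
    using assms by (intro mult_right_mono) (auto intro: mult_left_mono)
  also have "\<dots> = exp (c*(y+d)) - exp (c*y)" by (simp add: algebra_simps exp_add)
  finally show ?thesis .
qed

lemma mono_exp': "(c::real) \<ge> 0 \<Longrightarrow> x \<le> y \<Longrightarrow> exp (c*x) \<le> exp (c*y)"
  by (simp add: mult_left_mono)

lemma mj:
  assumes c: "(c::real) \<ge> 0" and "A \<le> X" "B \<le> X" "A + B \<le> X + Y"
  shows "exp (c*A) + exp (c*B) \<le> exp (c*X) + exp (c*Y)"
proof (cases "B \<le> Y")
  case True thus ?thesis using assms mono_exp'[OF c] by (meson add_mono)
next
  case False
  define d where "d = B - Y"
  have e1: "exp (c*(Y+d)) - exp (c*Y) \<le> exp (c*((X-d)+d)) - exp (c*(X-d))"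
    by (rule inc_exp) (use c assms False in \<open>auto simp: d_def\<close>)
  have e2: "exp (c*A) \<le> exp (c*(X-d))" using assms by (intro mono_exp') (auto simp: d_def)
  have "exp (c*(Y+d)) = exp (c*B)" "exp (c*((X-d)+d)) = exp (c*X)" by (auto simp: d_def)
  with e1 e2 show ?thesis by linarith
qed

lemma mj2:
  assumes c: "(c::real) \<ge> 0" and "Y \<le> B" "A \<le> X" "B - Y \<le> X - A" "Y \<le> A"
  shows "exp (c*A) + exp (c*B) \<le> exp (c*X) + exp (c*Y)"
proof -
  define d where "d = B - Y"
  have e1: "exp (c*(Y+d)) - exp (c*Y) \<le> exp (c*(A+d)) - exp (c*A)"
    by (rule inc_exp) (use c assms in \<open>auto simp: d_def\<close>)
  have e2: "exp (c*(A+d)) \<le> exp (c*X)" using assms by (intro mono_exp') (auto simp: d_def)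
  have "exp (c*(Y+d)) = exp (c*B)" by (auto simp: d_def)
  with e1 e2 show ?thesis by linarith
qed

lemma core:
  fixes c t1 t2 s1 s2 p q :: real
  assumes c: "c \<ge> 0" and L: "\<bar>p - q\<bar> \<le> \<bar>t2 - s2\<bar>" and P: "\<bar>p\<bar> \<le> \<bar>t2\<bar>" and Q: "\<bar>q\<bar> \<le> \<bar>s2\<bar>"
    and o1: "s1 + q \<le> t1 + p" and o2: "t1 - p \<le> s1 - q"
  shows "exp (c*(t1+p)) + exp (c*(s1-q)) \<le>
     max (exp (c*(t1+t2)) + exp (c*(s1-s2))) (exp (c*(s1+s2)) + exp (c*(t1-t2)))"
proof -
  consider "t2 \<ge> 0" "s2 \<ge> 0" "s2 \<le> t2" | "t2 \<ge> 0" "s2 \<ge> 0" "t2 < s2"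
    | "t2 \<le> 0" "s2 \<le> 0" "t2 \<le> s2" | "t2 \<le> 0" "s2 \<le> 0" "s2 < t2"
    | "t2 \<ge> 0" "s2 \<le> 0" | "t2 \<le> 0" "s2 \<ge> 0" by linarith
  thus ?thesis
  proof cases
    case 1
    have "exp (c*(t1+p)) + exp (c*(s1-q)) \<le> exp (c*(t1+t2)) + exp (c*(s1-s2))"
      by (rule mj2[OF c]) (use 1 L P Q o1 o2 in \<open>auto simp: abs_if split: if_splits\<close>)
    thus ?thesis by linarith
  next
    case 2
    have "exp (c*(t1+p)) + exp (c*(s1-q)) \<le> exp (c*(s1+s2)) + exp (c*(t1-t2))"
      by (rule mj[OF c]) (use 2 L P Q o1 o2 in \<open>auto simp: abs_if split: if_splits\<close>)
    thus ?thesis by linarith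
  next
    case 3
    have "exp (c*(t1+p)) + exp (c*(s1-q)) \<le> exp (c*(t1-t2)) + exp (c*(s1+s2))"
      by (rule mj2[OF c]) (use 3 L P Q o1 o2 in \<open>auto simp: abs_if split: if_splits\<close>)
    thus ?thesis by linarith
  next
    case 4
    have "exp (c*(t1+p)) + exp (c*(s1-q)) \<le> exp (c*(s1-s2)) + exp (c*(t1+t2))"
      by (rule mj[OF c]) (use 4 L P Q o1 o2 in \<open>auto simp: abs_if split: if_splits\<close>)
    thus ?thesis by linarith
  next
    case 5
    have "exp (c*(t1+p)) \<le> exp (c*(t1+t2))" "exp (c*(s1-q)) \<le> exp (c*(s1-s2))"
      by (intro mono_exp'[OF c]; use 5 P Q in \<open>auto simp: abs_if split: if_splits\<close>)+
    thus ?thesis by linarith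
  next
    case 6
    have "exp (c*(t1+p)) \<le> exp (c*(t1-t2))" "exp (c*(s1-q)) \<le> exp (c*(s1+s2))"
      by (intro mono_exp'[OF c]; use 6 P Q in \<open>auto simp: abs_if split: if_splits\<close>)+
    thus ?thesis by linarith
  qed
qed


lemma sum_PiE_Suc:
  "(\<Sum>\<sigma>\<in>PiE {..<Suc M} (\<lambda>_. A). F \<sigma>) = (\<Sum>e\<in>A. \<Sum>\<sigma>\<in>PiE {..<M} (\<lambda>_. A). F (\<sigma>(M := e)))"
proof -
  have eq: "PiE {..<Suc M} (\<lambda>_. A) = (\<lambda>(y, g). g(M := y)) ` (A \<times> PiE {..<M} (\<lambda>_. A))"
    using PiE_insert_eq[of M "{..<M}" "\<lambda>_. A"] by (simp add: lessThan_Suc)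
  have inj: "inj_on (\<lambda>(y, g). g(M := y)) (A \<times> PiE {..<M} (\<lambda>_. A))"
  proof (rule inj_onI, clarify)
    fix y g y' g' assume "y \<in> A" "g \<in> PiE {..<M} (\<lambda>_. A)" "y' \<in> A" "g' \<in> PiE {..<M} (\<lambda>_. A)"
      and e: "g(M := y) = g'(M := y')"
    hence "y = y'" by (metis fun_upd_same)
    moreover have "g = g'"
    proof
      fix k show "g k = g' k"
      proof (cases "k = M")
        case True thus ?thesis using \<open>g \<in> _\<close> \<open>g' \<in> _\<close> by (auto simp: PiE_def extensional_def)
      next
        case False thus ?thesis using e by (metis fun_upd_other)
      qed
    qed
    ultimately show "y = y' \<and> g = g'" by simp
  qed
  show ?thesis unfolding eq
    by (subst sum.reindex[OF inj]) (simp add: sum.cartesian_product split_beta)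
qed

lemma sum_upd_Suc:
  "(\<Sum>k<Suc M. (\<sigma>(M := e)) k * f k) = (\<Sum>k<M. \<sigma> k * f k) + e * f M"
proof -
  have "(\<Sum>k<M. (\<sigma>(M := e)) k * f k) = (\<Sum>k<M. \<sigma> k * f k)" by (intro sum.cong) auto
  thus ?thesis by simp
qed

lemma two_point:
  fixes r a :: "'w \<Rightarrow> real"
  assumes W: "finite W" "W \<noteq> {}" and c: "c \<ge> 0"
    and lip: "\<forall>x y. \<bar>\<phi> x - \<phi> y\<bar> \<le> \<bar>x - y\<bar>" and z: "\<phi> 0 = 0"
  shows "exp (c * (MAX w\<in>W. r w + \<phi> (a w))) + exp (c * (MAX w\<in>W. r w - \<phi> (a w)))
       \<le> exp (c * (MAX w\<in>W. r w + a w)) + exp (c * (MAX w\<in>W. r w - a w))"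
proof -
  obtain w1 where w1: "w1 \<in> W" "(MAX w\<in>W. r w + \<phi> (a w)) = r w1 + \<phi> (a w1)"
    using MAX_attained'[OF W, of "\<lambda>w. r w + \<phi> (a w)"] by blast
  obtain w2 where w2: "w2 \<in> W" "(MAX w\<in>W. r w - \<phi> (a w)) = r w2 - \<phi> (a w2)"
    using MAX_attained'[OF W, of "\<lambda>w. r w - \<phi> (a w)"] by blast
  have o1: "r w2 + \<phi> (a w2) \<le> r w1 + \<phi> (a w1)" using MAX_ge'[OF W(1) w2(1), of "\<lambda>w. r w + \<phi> (a w)"] w1 by simp
  have o2: "r w1 - \<phi> (a w1) \<le> r w2 - \<phi> (a w2)" using MAX_ge'[OF W(1) w1(1), of "\<lambda>w. r w - \<phi> (a w)"] w2 by simp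
  have P: "\<bar>\<phi> (a w1)\<bar> \<le> \<bar>a w1\<bar>" using lip[rule_format, of "a w1" 0] z by simp
  have Q: "\<bar>\<phi> (a w2)\<bar> \<le> \<bar>a w2\<bar>" using lip[rule_format, of "a w2" 0] z by simp
  have "exp (c * (r w1 + \<phi> (a w1))) + exp (c * (r w2 - \<phi> (a w2))) \<le>
     max (exp (c*(r w1 + a w1)) + exp (c*(r w2 - a w2))) (exp (c*(r w2 + a w2)) + exp (c*(r w1 - a w1)))"
    by (rule core[OF c lip[rule_format] P Q o1 o2])
  also have "\<dots> \<le> exp (c * (MAX w\<in>W. r w + a w)) + exp (c * (MAX w\<in>W. r w - a w))"
  proof -
    have A: "\<And>w. w \<in> W \<Longrightarrow> exp (c*(r w + a w)) \<le> exp (c * (MAX w\<in>W. r w + a w))"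
      by (intro mono_exp'[OF c] MAX_ge'[OF W(1)])
    have B: "\<And>w. w \<in> W \<Longrightarrow> exp (c*(r w - a w)) \<le> exp (c * (MAX w\<in>W. r w - a w))"
      by (intro mono_exp'[OF c] MAX_ge'[OF W(1)])
    show ?thesis by (intro max.boundedI add_mono A B w1(1) w2(1))
  qed
  finally show ?thesis using w1 w2 by simp
qed

lemma MAXcong: "(\<And>w. w \<in> W \<Longrightarrow> f w = g w) \<Longrightarrow> (MAX w\<in>W. f w) = (MAX w\<in>W. (g w::real))"
  by (metis image_cong)

lemma sum_pm: "(\<Sum>e\<in>{-1,1::real}. F e) = F 1 + F (-1)"
  by (simp add: add.commute)

lemma contraction:
  fixes \<phi> :: "nat \<Rightarrow> real \<Rightarrow> real" and a :: "'w \<Rightarrow> nat \<Rightarrow> real"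
  assumes W: "finite W" "W \<noteq> {}" and c: "c \<ge> 0"
    and lip: "\<forall>k<M. \<forall>x y. \<bar>\<phi> k x - \<phi> k y\<bar> \<le> \<bar>x - y\<bar>" and z: "\<forall>k<M. \<phi> k 0 = 0"
  shows "(\<Sum>\<sigma>\<in>PiE {..<M} (\<lambda>_. {-1,1::real}). exp (c * (MAX w\<in>W. r w + (\<Sum>k<M. \<sigma> k * \<phi> k (a w k)))))
       \<le> (\<Sum>\<sigma>\<in>PiE {..<M} (\<lambda>_. {-1,1::real}). exp (c * (MAX w\<in>W. r w + (\<Sum>k<M. \<sigma> k * a w k))))"
  using lip z
proof (induction M arbitrary: r)
  case 0
  show ?case by simp
next
  case (Suc M)
  define RS where "RS = PiE {..<M} (\<lambda>_. {-1,1::real})"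
  have lipM: "\<forall>x y. \<bar>\<phi> M x - \<phi> M y\<bar> \<le> \<bar>x - y\<bar>" and zM: "\<phi> M 0 = 0" using Suc.prems by auto
  have IH: "\<And>r. (\<Sum>\<sigma>\<in>RS. exp (c * (MAX w\<in>W. r w + (\<Sum>k<M. \<sigma> k * \<phi> k (a w k)))))
       \<le> (\<Sum>\<sigma>\<in>RS. exp (c * (MAX w\<in>W. r w + (\<Sum>k<M. \<sigma> k * a w k))))"
    unfolding RS_def using Suc.prems by (intro Suc.IH) auto
  define S1 where "S1 = (\<lambda>\<sigma> w. (\<Sum>k<M. \<sigma> k * \<phi> k (a w k)))"
  define S2 where "S2 = (\<lambda>\<sigma> w. (\<Sum>k<M. \<sigma> k * a w k))"
  have "(\<Sum>\<sigma>\<in>PiE {..<Suc M} (\<lambda>_. {-1,1::real}). exp (c * (MAX w\<in>W. r w + (\<Sum>k<Suc M. \<sigma> k * \<phi> k (a w k)))))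
     = (\<Sum>e\<in>{-1,1::real}. \<Sum>\<sigma>\<in>RS. exp (c * (MAX w\<in>W. r w + (S1 \<sigma> w + e * \<phi> M (a w M)))))"
    unfolding RS_def sum_PiE_Suc sum_upd_Suc S1_def ..
  also have "\<dots> = (\<Sum>e\<in>{-1,1::real}. \<Sum>\<sigma>\<in>RS. exp (c * (MAX w\<in>W. (r w + e * \<phi> M (a w M)) + S1 \<sigma> w)))"
    by (intro sum.cong refl arg_cong[where f="\<lambda>x. exp (c*x)"] MAXcong) (simp add: ac_simps)
  also have "\<dots> \<le> (\<Sum>e\<in>{-1,1::real}. \<Sum>\<sigma>\<in>RS. exp (c * (MAX w\<in>W. (r w + e * \<phi> M (a w M)) + S2 \<sigma> w)))"
    unfolding S1_def S2_def by (intro sum_mono IH)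
  also have "\<dots> = (\<Sum>\<sigma>\<in>RS. exp (c * (MAX w\<in>W. (r w + S2 \<sigma> w) + \<phi> M (a w M)))
                        + exp (c * (MAX w\<in>W. (r w + S2 \<sigma> w) - \<phi> M (a w M))))"
    unfolding sum_pm sum.distrib[symmetric]
    apply (intro sum.cong refl, rule arg_cong2[where f="(+)"])
    by (intro arg_cong[where f="\<lambda>x. exp (c*x)"] MAXcong; simp add: ac_simps)+
  also have "\<dots> \<le> (\<Sum>\<sigma>\<in>RS. exp (c * (MAX w\<in>W. (r w + S2 \<sigma> w) + a w M))
                        + exp (c * (MAX w\<in>W. (r w + S2 \<sigma> w) - a w M)))"
    by (intro sum_mono two_point[OF W c lipM zM])
  also have "\<dots> = (\<Sum>e\<in>{-1,1::real}. \<Sum>\<sigma>\<in>RS. exp (c * (MAX w\<in>W. r w + (S2 \<sigma> w + e * a w M))))"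
    unfolding sum_pm sum.distrib[symmetric]
    apply (intro sum.cong refl, rule arg_cong2[where f="(+)"])
    by (intro arg_cong[where f="\<lambda>x. exp (c*x)"] MAXcong; simp add: ac_simps)+
  also have "\<dots> = (\<Sum>\<sigma>\<in>PiE {..<Suc M} (\<lambda>_. {-1,1::real}). exp (c * (MAX w\<in>W. r w + (\<Sum>k<Suc M. \<sigma> k * a w k))))"
    unfolding RS_def sum_PiE_Suc sum_upd_Suc S2_def ..
  finally show ?case .
qed


lemma rad_mgf:
  assumes "\<forall>k<M. \<bar>\<beta> k\<bar> \<le> (1::real)"
  shows "(\<Sum>\<sigma>\<in>PiE {..<M} (\<lambda>_. {-1,1::real}). exp (d * (\<Sum>k<M. \<sigma> k * \<beta> k))) \<le> 2^M * exp (d^2 * M / 2)"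
proof -
  have "(\<Sum>\<sigma>\<in>PiE {..<M} (\<lambda>_. {-1,1::real}). exp (d * (\<Sum>k<M. \<sigma> k * \<beta> k)))
      = (\<Sum>\<sigma>\<in>PiE {..<M} (\<lambda>_. {-1,1::real}). \<Prod>k<M. exp (d * (\<sigma> k * \<beta> k)))"
    by (simp add: sum_distrib_left exp_sum)
  also have "\<dots> = (\<Prod>k<M. \<Sum>e\<in>{-1,1::real}. exp (d * (e * \<beta> k)))"
    using sum_PiE_prod[where \<Omega>="{-1,1::real}" and M=M and f="\<lambda>k e. exp (d * (e * \<beta> k))"] by simp
  also have "\<dots> = (\<Prod>k<M. exp (d * \<beta> k) + exp (- (d * \<beta> k)))"
    by (simp add: add.commute)
  also have "\<dots> \<le> (\<Prod>k<M. 2 * exp (d^2 / 2))"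
  proof (rule prod_mono)
    fix k assume k: "k \<in> {..<M}"
    have 0: "0 \<le> exp (d * \<beta> k) + exp (- (d * \<beta> k))" by (intro add_nonneg_nonneg) auto
    have "exp (d * \<beta> k) + exp (- (d * \<beta> k)) \<le> 2 * exp ((d * \<beta> k)^2/2)"
      using cosh_le[of "d * \<beta> k"] by simp
    also have "(d * \<beta> k)^2 \<le> d^2"
    proof -
      have "\<bar>\<beta> k\<bar> \<le> 1" using assms k by auto
      hence "\<beta> k ^2 \<le> 1" by (simp add: abs_square_le_1)
      hence "d^2 * \<beta> k ^2 \<le> d^2 * 1" by (intro mult_left_mono) auto
      thus ?thesis by (simp add: power_mult_distrib)
    qed
    hence "2 * exp ((d * \<beta> k)^2/2) \<le> 2 * exp (d^2/2)" by simp
    finally show "0 \<le> exp (d * \<beta> k) + exp (- (d * \<beta> k)) \<and> exp (d * \<beta> k) + exp (- (d * \<beta> k)) \<le> 2 * exp (d^2 / 2)"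
      using 0 by simp
  qed
  also have "\<dots> = 2^M * exp (d^2 * M / 2)"
    by (simp add: power_mult_distrib exp_of_nat_mult[symmetric] mult_ac)
  finally show ?thesis .
qed

lemma massart:
  fixes F :: "'f set" and b :: "'f \<Rightarrow> nat \<Rightarrow> real" and W :: "('f \<Rightarrow> real) set"
  assumes F: "finite F" "F \<noteq> {}" and W: "finite W" "W \<noteq> {}"
    and b: "\<forall>T\<in>F. \<forall>k<M. \<bar>b T k\<bar> \<le> 1" and R: "\<forall>w\<in>W. (\<Sum>T\<in>F. \<bar>w T\<bar>) \<le> R"
    and c: "c \<ge> 0" and R0: "R \<ge> 0"
  shows "(\<Sum>\<sigma>\<in>PiE {..<M} (\<lambda>_. {-1,1::real}). exp (c * (MAX w\<in>W. \<Sum>k<M. \<sigma> k * (\<Sum>T\<in>F. w T * b T k))))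
     \<le> 2^M * (2 * card F * exp (c^2 * R^2 * M / 2))"
proof -
  define RS where "RS = PiE {..<M} (\<lambda>_. {-1,1::real})"
  define B where "B = (\<lambda>\<sigma> T. \<Sum>k<M. \<sigma> k * b T k)"
  have pt: "exp (c * (MAX w\<in>W. \<Sum>k<M. \<sigma> k * (\<Sum>T\<in>F. w T * b T k)))
      \<le> (\<Sum>T\<in>F. exp ((c*R) * B \<sigma> T) + exp (- (c*R) * B \<sigma> T))" for \<sigma>
  proof -
    obtain w0 where w0: "w0 \<in> W" and mx: "(MAX w\<in>W. \<Sum>k<M. \<sigma> k * (\<Sum>T\<in>F. w T * b T k)) = (\<Sum>k<M. \<sigma> k * (\<Sum>T\<in>F. w0 T * b T k))"
      using MAX_attained[OF W, of "\<lambda>w. \<Sum>k<M. \<sigma> k * (\<Sum>T\<in>F. w T * b T k)"] by blast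
    define Bm where "Bm = (MAX T\<in>F. \<bar>B \<sigma> T\<bar>)"
    obtain T0 where T0: "T0 \<in> F" and bm: "Bm = \<bar>B \<sigma> T0\<bar>"
      unfolding Bm_def using MAX_attained[OF F, of "\<lambda>T. \<bar>B \<sigma> T\<bar>"] by blast
    have Bm0: "Bm \<ge> 0" using bm by simp
    have "(\<Sum>k<M. \<sigma> k * (\<Sum>T\<in>F. w0 T * b T k)) = (\<Sum>T\<in>F. w0 T * B \<sigma> T)"
      unfolding B_def by (simp add: sum_distrib_left mult_ac sum.swap[of _ F])
    also have "\<dots> \<le> (\<Sum>T\<in>F. \<bar>w0 T\<bar> * Bm)"
    proof (rule sum_mono)
      fix T assume T: "T \<in> F"
      have "w0 T * B \<sigma> T \<le> \<bar>w0 T\<bar> * \<bar>B \<sigma> T\<bar>" by (simp add: abs_mult[symmetric])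
      also have "\<dots> \<le> \<bar>w0 T\<bar> * Bm" unfolding Bm_def by (intro mult_left_mono MAX_ge[OF F(1) T]) auto
      finally show "w0 T * B \<sigma> T \<le> \<bar>w0 T\<bar> * Bm" .
    qed
    also have "\<dots> = (\<Sum>T\<in>F. \<bar>w0 T\<bar>) * Bm" by (simp add: sum_distrib_right)
    also have "\<dots> \<le> R * Bm" using R w0 Bm0 by (intro mult_right_mono) auto
    finally have le: "(MAX w\<in>W. \<Sum>k<M. \<sigma> k * (\<Sum>T\<in>F. w T * b T k)) \<le> R * Bm" unfolding mx .
    have "exp (c * (MAX w\<in>W. \<Sum>k<M. \<sigma> k * (\<Sum>T\<in>F. w T * b T k))) \<le> exp (c * (R * Bm))"
      using le c by (simp add: mult_left_mono)
    also have "\<dots> \<le> exp ((c*R) * B \<sigma> T0) + exp (- (c*R) * B \<sigma> T0)"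
      unfolding bm by (cases "B \<sigma> T0 \<ge> 0") (auto simp: mult_ac)
    also have "\<dots> \<le> (\<Sum>T\<in>F. exp ((c*R) * B \<sigma> T) + exp (- (c*R) * B \<sigma> T))"
      by (rule member_le_sum[OF T0 _ F(1), of "\<lambda>T. exp ((c*R) * B \<sigma> T) + exp (- (c*R) * B \<sigma> T)"])
         (auto intro: add_nonneg_nonneg)
    finally show ?thesis .
  qed
  have "(\<Sum>\<sigma>\<in>RS. exp (c * (MAX w\<in>W. \<Sum>k<M. \<sigma> k * (\<Sum>T\<in>F. w T * b T k))))
      \<le> (\<Sum>\<sigma>\<in>RS. \<Sum>T\<in>F. exp ((c*R) * B \<sigma> T) + exp (- (c*R) * B \<sigma> T))"
    by (rule sum_mono) (rule pt)
  also have "\<dots> = (\<Sum>T\<in>F. (\<Sum>\<sigma>\<in>RS. exp ((c*R) * B \<sigma> T)) + (\<Sum>\<sigma>\<in>RS. exp (- (c*R) * B \<sigma> T)))"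
    by (subst sum.swap) (simp add: sum.distrib)
  also have "\<dots> \<le> (\<Sum>T\<in>F. 2^M * exp ((c*R)^2 * M / 2) + 2^M * exp ((-(c*R))^2 * M / 2))"
  proof (rule sum_mono)
    fix T assume T: "T \<in> F"
    have bT: "\<forall>k<M. \<bar>b T k\<bar> \<le> 1" using b T by auto
    show "(\<Sum>\<sigma>\<in>RS. exp ((c*R) * B \<sigma> T)) + (\<Sum>\<sigma>\<in>RS. exp (- (c*R) * B \<sigma> T))
        \<le> 2^M * exp ((c*R)^2 * M / 2) + 2^M * exp ((-(c*R))^2 * M / 2)"
      unfolding RS_def B_def by (intro add_mono rad_mgf bT)
  qed
  also have "\<dots> = 2^M * (2 * card F * exp (c^2 * R^2 * M / 2))"
    by (simp add: power_mult_distrib mult_ac)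
  finally show ?thesis unfolding RS_def .
qed


lemma MAX_scale:
  assumes W: "finite W" "W \<noteq> {}" and c: "(c::real) \<ge> 0"
  shows "(MAX w\<in>W. c * f w) = c * (MAX w\<in>W. f w)"
proof -
  obtain w0 where w0: "w0 \<in> W" "(MAX w\<in>W. f w) = f w0" using MAX_attained[OF W, of f] by blast
  obtain w1 where w1: "w1 \<in> W" "(MAX w\<in>W. c * f w) = c * f w1" using MAX_attained[OF W, of "\<lambda>w. c * f w"] by blast
  have "c * f w1 \<le> c * f w0" using MAX_ge[OF W(1) w1(1), of f] w0 c by (simp add: mult_left_mono)
  moreover have "c * f w0 \<le> c * f w1" using MAX_ge[OF W(1) w0(1), of "\<lambda>w. c * f w"] w1 by simp
  ultimately show ?thesis using w0 w1 by simp
qed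

lemma unif_tail:
  fixes \<Omega> :: "'a set" and p :: "'a \<Rightarrow> real" and W :: "('f \<Rightarrow> real) set" and F :: "'f set"
    and b :: "'f \<Rightarrow> 'a \<Rightarrow> real" and \<phi> :: "'a \<Rightarrow> real \<Rightarrow> real"
  assumes fin: "finite \<Omega>" and pnn: "\<forall>x\<in>\<Omega>. p x \<ge> 0" and p1: "sum p \<Omega> = 1"
    and W: "finite W" "W \<noteq> {}" and M: "M > 0" and F: "finite F" "F \<noteq> {}"
    and b: "\<forall>T\<in>F. \<forall>x\<in>\<Omega>. \<bar>b T x\<bar> \<le> 1" and R: "\<forall>w\<in>W. (\<Sum>T\<in>F. \<bar>w T\<bar>) \<le> R" and R0: "R > 0"
    and lip: "\<forall>x\<in>\<Omega>. \<forall>u v. \<bar>\<phi> x u - \<phi> x v\<bar> \<le> \<bar>u - v\<bar>" and z: "\<forall>x\<in>\<Omega>. \<phi> x 0 = 0" and t: "t \<ge> 0"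
  shows "(\<Sum>s\<in>PiE {..<M} (\<lambda>_. \<Omega>). pwt p M s *
     (if (\<exists>w\<in>W. (\<Sum>x\<in>\<Omega>. p x * \<phi> x (\<Sum>T\<in>F. w T * b T x))
                   - (1/real M) * (\<Sum>k<M. \<phi> (s k) (\<Sum>T\<in>F. w T * b T (s k))) \<ge> t) then 1 else 0))
     \<le> 2 * card F * exp (- (t^2 * M / (8 * R^2)))"
proof -
  define PS where "PS = PiE {..<M} (\<lambda>_. \<Omega>)"
  define RS where "RS = PiE {..<M} (\<lambda>_. {-1,1::real})"
  define hh where "hh = (\<lambda>w x. \<phi> x (\<Sum>T\<in>F. w T * b T x))"
  define G where "G = (\<lambda>s. MAX w\<in>W. (\<Sum>x\<in>\<Omega>. p x * hh w x) - (1/real M) * (\<Sum>k<M. hh w (s k)))"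
  define lam where "lam = t * M / (4 * R^2)"
  define Bd where "Bd = 2 * card F * exp ((2*lam/M)^2 * R^2 * M / 2)"
  have lam0: "lam \<ge> 0" unfolding lam_def using t M by simp
  have pw0: "\<And>s. s \<in> PS \<Longrightarrow> pwt p M s \<ge> 0" unfolding PS_def using pnn pwt_nonneg by blast
  have ind: "(if (\<exists>w\<in>W. (\<Sum>x\<in>\<Omega>. p x * hh w x) - (1/real M) * (\<Sum>k<M. hh w (s k)) \<ge> t) then 1 else 0)
      \<le> exp (-lam * t) * exp (lam * G s)" for s
  proof (cases "\<exists>w\<in>W. (\<Sum>x\<in>\<Omega>. p x * hh w x) - (1/real M) * (\<Sum>k<M. hh w (s k)) \<ge> t")
    case True
    then obtain w where w: "w \<in> W" "(\<Sum>x\<in>\<Omega>. p x * hh w x) - (1/real M) * (\<Sum>k<M. hh w (s k)) \<ge> t" by blast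
    have "t \<le> G s" unfolding G_def using w MAX_ge[OF W(1) w(1)] by (meson order_trans)
    hence "0 \<le> -lam * t + lam * G s" using lam0 by (simp add: mult_left_mono algebra_simps)
    hence "1 \<le> exp (-lam * t + lam * G s)" by simp
    hence "1 \<le> exp (-lam * t) * exp (lam * G s)" by (simp only: exp_add)
    thus ?thesis using True by simp
  next
    case False thus ?thesis by simp
  qed
  have "(\<Sum>s\<in>PS. pwt p M s * (if (\<exists>w\<in>W. (\<Sum>x\<in>\<Omega>. p x * hh w x) - (1/real M) * (\<Sum>k<M. hh w (s k)) \<ge> t) then 1 else 0))
      \<le> (\<Sum>s\<in>PS. pwt p M s * (exp (-lam * t) * exp (lam * G s)))"
    by (intro sum_mono mult_left_mono ind pw0)
  also have "\<dots> = exp (-lam * t) * (\<Sum>s\<in>PS. pwt p M s * exp (lam * G s))"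
    by (simp add: sum_distrib_left mult_ac)
  also have "(\<Sum>s\<in>PS. pwt p M s * exp (lam * G s))
      \<le> (1/2^M) * (\<Sum>\<sigma>\<in>RS. \<Sum>s\<in>PS. pwt p M s * exp (2 * lam * (MAX w\<in>W. (1/real M) * (\<Sum>k<M. \<sigma> k * hh w (s k)))))"
    unfolding PS_def RS_def G_def by (rule symmetrization[OF fin pnn p1 W M lam0])
  also have "\<dots> = (1/2^M) * (\<Sum>s\<in>PS. pwt p M s * (\<Sum>\<sigma>\<in>RS. exp (2 * lam * (MAX w\<in>W. (1/real M) * (\<Sum>k<M. \<sigma> k * hh w (s k))))))"
    by (subst sum.swap) (simp add: sum_distrib_left)
  also have "\<dots> \<le> (1/2^M) * (\<Sum>s\<in>PS. pwt p M s * (2^M * Bd))"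
  proof (intro mult_left_mono sum_mono)
    fix s assume s: "s \<in> PS"
    show "0 \<le> pwt p M s" using pw0[OF s] .
    have sk: "\<And>k. k < M \<Longrightarrow> s k \<in> \<Omega>" using s unfolding PS_def by auto
    define c where "c = 2 * lam / real M"
    have c0: "c \<ge> 0" unfolding c_def using lam0 by simp
    have "(\<Sum>\<sigma>\<in>RS. exp (2 * lam * (MAX w\<in>W. (1/real M) * (\<Sum>k<M. \<sigma> k * hh w (s k)))))
        = (\<Sum>\<sigma>\<in>RS. exp (c * (MAX w\<in>W. (\<lambda>w. 0) w + (\<Sum>k<M. \<sigma> k * \<phi> (s k) (\<Sum>T\<in>F. w T * b T (s k))))))"
    proof (rule sum.cong[OF refl])
      fix \<sigma>
      have "(MAX w\<in>W. (1/real M) * (\<Sum>k<M. \<sigma> k * hh w (s k))) = (1/real M) * (MAX w\<in>W. (\<Sum>k<M. \<sigma> k * hh w (s k)))"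
        by (rule MAX_scale[OF W]) simp
      thus "exp (2 * lam * (MAX w\<in>W. (1/real M) * (\<Sum>k<M. \<sigma> k * hh w (s k))))
          = exp (c * (MAX w\<in>W. (\<lambda>w. 0) w + (\<Sum>k<M. \<sigma> k * \<phi> (s k) (\<Sum>T\<in>F. w T * b T (s k)))))"
        unfolding c_def hh_def by simp
    qed
    also have "\<dots> \<le> (\<Sum>\<sigma>\<in>RS. exp (c * (MAX w\<in>W. (\<lambda>w. 0) w + (\<Sum>k<M. \<sigma> k * (\<Sum>T\<in>F. w T * b T (s k))))))"
      unfolding RS_def
      by (rule contraction[OF W c0, where \<phi>="\<lambda>k. \<phi> (s k)" and a="\<lambda>w k. \<Sum>T\<in>F. w T * b T (s k)"])
         (use lip z sk in auto)
    also have "\<dots> = (\<Sum>\<sigma>\<in>RS. exp (c * (MAX w\<in>W. (\<Sum>k<M. \<sigma> k * (\<Sum>T\<in>F. w T * b T (s k))))))"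
      by simp
    also have "\<dots> \<le> 2^M * (2 * card F * exp (c^2 * R^2 * M / 2))"
      unfolding RS_def
      by (rule massart[OF F W _ R c0 less_imp_le[OF R0], where b="\<lambda>T k. b T (s k)"]) (use b sk in auto)
    also have "\<dots> = 2^M * Bd" unfolding Bd_def c_def by simp
    finally show "(\<Sum>\<sigma>\<in>RS. exp (2 * lam * (MAX w\<in>W. (1/real M) * (\<Sum>k<M. \<sigma> k * hh w (s k))))) \<le> 2^M * Bd" .
  qed simp
  also have "\<dots> = Bd"
    using pwt_sum1[OF fin p1, of M] unfolding PS_def by (simp add: sum_distrib_right[symmetric])
  finally have main: "(\<Sum>s\<in>PS. pwt p M s * (if (\<exists>w\<in>W. (\<Sum>x\<in>\<Omega>. p x * hh w x) - (1/real M) * (\<Sum>k<M. hh w (s k)) \<ge> t) then 1 else 0))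
      \<le> exp (-lam * t) * Bd" by (simp add: mult_left_mono)
  have "exp (-lam * t) * Bd = 2 * card F * exp (-lam * t + (2*lam/M)^2 * R^2 * M / 2)"
    unfolding Bd_def exp_add by (simp add: mult_ac)
  also have "-lam * t + (2*lam/M)^2 * R^2 * M / 2 = - (t^2 * M / (8 * R^2))"
    unfolding lam_def using M R0 by (simp add: field_simps power2_eq_square)
  finally show ?thesis using main unfolding PS_def hh_def by simp
qed


definition lg :: "real \<Rightarrow> real" where "lg v = ln (1 + exp (- v))"
definition HH :: "real \<Rightarrow> real \<Rightarrow> real" where "HH p b = p * lg b + (1 - p) * lg (- b)"

lemma sigmoid_pos: "sigmoid x > 0" unfolding sigmoid_def by (simp add: add_pos_pos)
lemma sigmoid_lt1: "sigmoid x < 1" unfolding sigmoid_def by (simp add: add_pos_pos)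

lemma one_minus_sigmoid: "1 - sigmoid x = exp (-x) / (1 + exp (-x))"
proof -
  have h: "1 + exp (-x) \<noteq> 0" by (smt (verit) exp_gt_zero)
  have "1 = (1 + exp (-x)) / (1 + exp (-x))" using h by simp
  also have "\<dots> = 1 / (1 + exp (-x)) + exp (-x) / (1 + exp (-x))" by (rule add_divide_distrib)
  finally show ?thesis unfolding sigmoid_def by linarith
qed

lemma sigmoid_alt: "sigmoid x = exp x / (1 + exp x)"
  unfolding sigmoid_def by (simp add: field_simps exp_minus add_pos_pos)

lemma sigmoid_deriv: "(sigmoid has_real_derivative (sigmoid x * (1 - sigmoid x))) (at x)"
proof -
  have "((\<lambda>x. 1 / (1 + exp (- x))) has_real_derivative (exp (-x) / (1 + exp (-x))^2)) (at x)"
    by (auto intro!: derivative_eq_intros simp: add_pos_pos power2_eq_square field_simps)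
       (smt (verit) exp_gt_zero)
  moreover have "exp (-x) / (1 + exp (-x))^2 = sigmoid x * (1 - sigmoid x)"
    unfolding one_minus_sigmoid by (simp add: sigmoid_def power2_eq_square)
  ultimately show ?thesis unfolding sigmoid_def[abs_def] by simp
qed

lemma sig_var_le: "sigmoid x * (1 - sigmoid x) \<le> 1/4"
proof -
  have "0 \<le> (sigmoid x - 1/2)^2" by simp
  thus ?thesis by (simp add: power2_eq_square algebra_simps)
qed

lemma sig_var_ge: "sigmoid x * (1 - sigmoid x) \<ge> 0"
  using sigmoid_pos[of x] sigmoid_lt1[of x] by simp

lemma sigmoid_mono: "a \<le> b \<Longrightarrow> sigmoid a \<le> sigmoid b"
  by (rule DERIV_nonneg_imp_nondecreasing[of a b sigmoid])
     (use sigmoid_deriv sig_var_ge in blast)+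

lemma sigmoid_lip_up: "a \<le> b \<Longrightarrow> sigmoid b - sigmoid a \<le> (b - a) / 4"
proof -
  assume ab: "a \<le> b"
  have "(\<lambda>x. x/4 - sigmoid x) a \<le> (\<lambda>x. x/4 - sigmoid x) b"
  proof (rule DERIV_nonneg_imp_nondecreasing[OF ab])
    fix x
    have "((\<lambda>x. x/4 - sigmoid x) has_real_derivative (1/4 - sigmoid x * (1 - sigmoid x))) (at x)"
      by (auto intro!: derivative_eq_intros sigmoid_deriv)
    thus "\<exists>y. ((\<lambda>x. x/4 - sigmoid x) has_real_derivative y) (at x) \<and> y \<ge> 0"
      using sig_var_le[of x] by force
  qed
  thus ?thesis by (simp add: field_simps)
qed

lemma sigmoid_lip: "\<bar>sigmoid a - sigmoid b\<bar> \<le> \<bar>a - b\<bar> / 4"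
proof (cases "a \<le> b")
  case True thus ?thesis using sigmoid_lip_up[OF True] sigmoid_mono[OF True] by simp
next
  case False hence "b \<le> a" by simp
  thus ?thesis using sigmoid_lip_up[of b a] sigmoid_mono[of b a] by simp
qed

lemma HH_deriv: "((\<lambda>b. HH p b) has_real_derivative (sigmoid b - p)) (at b)"
proof -
  have "((\<lambda>b. p * ln (1 + exp (- b)) + (1 - p) * ln (1 + exp (- (- b)))) has_real_derivative
        (p * (- exp (- b) / (1 + exp (- b))) + (1 - p) * (exp b / (1 + exp b)))) (at b)"
    by (auto intro!: derivative_eq_intros simp: add_pos_pos) (simp_all add: mult.commute)
  moreover have "p * (- exp (- b) / (1 + exp (- b))) + (1 - p) * (exp b / (1 + exp b)) = sigmoid b - p"
  proof -
    have e1: "p * (- exp (- b) / (1 + exp (- b))) = - p * (1 - sigmoid b)" unfolding one_minus_sigmoid by simp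
    have e2: "(1 - p) * (exp b / (1 + exp b)) = (1 - p) * sigmoid b" unfolding sigmoid_alt ..
    show ?thesis unfolding e1 e2 by (simp add: algebra_simps)
  qed
  ultimately show ?thesis unfolding HH_def lg_def by simp
qed

lemma K2: "HH (sigmoid a) b - HH (sigmoid a) a \<le> (b - a)^2 / 8"
proof -
  define F where "F = (\<lambda>x. HH (sigmoid a) x - HH (sigmoid a) a - (x - a)^2 / 8)"
  have dF: "(F has_real_derivative (sigmoid x - sigmoid a - (x - a) / 4)) (at x)" for x
    unfolding F_def by (auto intro!: derivative_eq_intros HH_deriv simp: power2_eq_square)
  have Fa: "F a = 0" unfolding F_def by simp
  have "F b \<le> 0"
  proof (cases "a \<le> b")
    case True
    have "F b \<le> F a"
    proof (rule DERIV_nonpos_imp_nonincreasing[OF True])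
      fix x assume "a \<le> x" "x \<le> b"
      thus "\<exists>y. (F has_real_derivative y) (at x) \<and> y \<le> 0"
        using dF sigmoid_lip_up[of a x] by force
    qed
    thus ?thesis using Fa by simp
  next
    case False hence ba: "b \<le> a" by simp
    have "F b \<le> F a"
    proof (rule DERIV_nonneg_imp_nondecreasing[OF ba])
      fix x assume "b \<le> x" "x \<le> a"
      thus "\<exists>y. (F has_real_derivative y) (at x) \<and> y \<ge> 0"
        using dF sigmoid_lip_up[of x a] by force
    qed
    thus ?thesis using Fa by simp
  qed
  thus ?thesis unfolding F_def by simp
qed

lemma K1: "2 * (sigmoid a - sigmoid b)^2 \<le> HH (sigmoid a) b - HH (sigmoid a) a"
proof -
  define G where "G = (\<lambda>x. HH (sigmoid a) x - HH (sigmoid a) a - 2 * (sigmoid a - sigmoid x)^2)"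
  have dG: "(G has_real_derivative ((sigmoid x - sigmoid a) * (1 - 4 * (sigmoid x * (1 - sigmoid x))))) (at x)" for x
    unfolding G_def
    by (rule derivative_eq_intros HH_deriv sigmoid_deriv refl | simp)+ (simp add: algebra_simps power2_eq_square)
  have Ga: "G a = 0" unfolding G_def by simp
  have "0 \<le> G b"
  proof (cases "a \<le> b")
    case True
    have "G a \<le> G b"
    proof (rule DERIV_nonneg_imp_nondecreasing[OF True])
      fix x assume "a \<le> x" "x \<le> b"
      hence "sigmoid x - sigmoid a \<ge> 0" using sigmoid_mono[of a x] by simp
      moreover have "1 - 4 * (sigmoid x * (1 - sigmoid x)) \<ge> 0" using sig_var_le[of x] by simp
      ultimately show "\<exists>y. (G has_real_derivative y) (at x) \<and> y \<ge> 0"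
        using dG by (meson mult_nonneg_nonneg)
    qed
    thus ?thesis using Ga by simp
  next
    case False hence ba: "b \<le> a" by simp
    have "G a \<le> G b"
    proof (rule DERIV_nonpos_imp_nonincreasing[OF ba])
      fix x assume "b \<le> x" "x \<le> a"
      hence "sigmoid x - sigmoid a \<le> 0" using sigmoid_mono[of x a] by simp
      moreover have "1 - 4 * (sigmoid x * (1 - sigmoid x)) \<ge> 0" using sig_var_le[of x] by simp
      ultimately show "\<exists>y. (G has_real_derivative y) (at x) \<and> y \<le> 0"
        using dG by (meson mult_nonpos_nonneg)
    qed
    thus ?thesis using Ga by simp
  qed
  thus ?thesis unfolding G_def by simp
qed


lemma cube_vals: "x \<in> cube n \<Longrightarrow> i < n \<Longrightarrow> x i = 1 \<or> x i = -1"
  unfolding cube_def by auto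

lemma cube_out: "x \<in> cube n \<Longrightarrow> n \<le> i \<Longrightarrow> x i = 0"
  unfolding cube_def by auto

lemma cube_abs: "x \<in> cube n \<Longrightarrow> \<bar>x i\<bar> \<le> 1"
  unfolding cube_def by (cases "i < n") auto

lemma cube_upd: "x \<in> cube n \<Longrightarrow> u < n \<Longrightarrow> v \<in> {-1,1} \<Longrightarrow> x(u := v) \<in> cube n"
  unfolding cube_def by auto

definition cext :: "nat \<Rightarrow> (nat \<Rightarrow> real) \<Rightarrow> (nat \<Rightarrow> real)" where
  "cext n f = (\<lambda>i. if i < n then f i else 0)"

lemma cube_bij: "bij_betw (cext n) (PiE {..<n} (\<lambda>_. {-1,1::real})) (cube n)"
proof (rule bij_betw_byWitness[where f'="\<lambda>x. restrict x {..<n}"])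
  show "\<forall>f\<in>PiE {..<n} (\<lambda>_. {-1,1::real}). restrict (cext n f) {..<n} = f"
    unfolding cext_def by (auto simp: PiE_def extensional_def restrict_def fun_eq_iff)
  show "\<forall>x\<in>cube n. cext n (restrict x {..<n}) = x"
    unfolding cext_def cube_def by (auto simp: fun_eq_iff)
  show "cext n ` PiE {..<n} (\<lambda>_. {-1,1::real}) \<subseteq> cube n"
    unfolding cext_def cube_def by (auto simp: PiE_def Pi_def)
  show "(\<lambda>x. restrict x {..<n}) ` cube n \<subseteq> PiE {..<n} (\<lambda>_. {-1,1::real})"
  proof
    fix z assume "z \<in> (\<lambda>x. restrict x {..<n}) ` cube n"
    then obtain x where x: "x \<in> cube n" "z = restrict x {..<n}" by blast
    have "\<forall>i\<in>{..<n}. x i \<in> {-1,1::real}" using x(1) unfolding cube_def by auto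
    thus "z \<in> PiE {..<n} (\<lambda>_. {-1,1::real})" unfolding x(2) by (simp add: restrict_PiE_iff)
  qed
qed

lemma cube_finite: "finite (cube n)"
proof -
  have "finite (PiE {..<n} (\<lambda>_. {-1,1::real}))" by (simp add: finite_PiE)
  thus ?thesis using bij_betw_finite[OF cube_bij] by simp
qed

lemma cube_ne: "cube n \<noteq> {}"
proof -
  have "(\<lambda>i. if i < n then 1 else 0) \<in> cube n" unfolding cube_def by auto
  thus ?thesis by auto
qed

lemma sum_cube_prod:
  "(\<Sum>y\<in>cube m. \<Prod>j<m. (F::nat \<Rightarrow> real \<Rightarrow> real) j (y j)) = (\<Prod>j<m. F j 1 + F j (-1))"
proof -
  have "(\<Sum>y\<in>cube m. \<Prod>j<m. F j (y j)) = (\<Sum>f\<in>PiE {..<m} (\<lambda>_. {-1,1::real}). \<Prod>j<m. F j (cext m f j))"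
    using sum.reindex_bij_betw[OF cube_bij, of "\<lambda>y. \<Prod>j<m. F j (y j)"] by simp
  also have "\<dots> = (\<Sum>f\<in>PiE {..<m} (\<lambda>_. {-1,1::real}). \<Prod>j<m. F j (f j))"
    by (intro sum.cong refl prod.cong) (auto simp: cext_def)
  also have "\<dots> = (\<Prod>j<m. \<Sum>e\<in>{-1,1::real}. F j e)"
    by (rule sum_PiE_prod) simp
  also have "\<dots> = (\<Prod>j<m. F j 1 + F j (-1))" by (simp add: add.commute)
  finally show ?thesis .
qed

definition flp :: "nat \<Rightarrow> (nat \<Rightarrow> real) \<Rightarrow> (nat \<Rightarrow> real)" where
  "flp u x = x(u := - x u)"

lemma flip_cube: "x \<in> cube n \<Longrightarrow> u < n \<Longrightarrow> flp u x \<in> cube n"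
  unfolding flp_def using cube_vals[of x n u] by (intro cube_upd) auto

lemma flip_flip: "flp u (flp u x) = x"
  unfolding flp_def by auto

lemma sum_flip: "u < n \<Longrightarrow> (\<Sum>x\<in>cube n. G (flp u x)) = (\<Sum>x\<in>cube n. G x)"
  by (rule sum.reindex_bij_witness[of _ "flp u" "flp u"]) (auto simp: flip_flip flip_cube)

lemma sum_pairing:
  fixes G1 G2 :: "(nat \<Rightarrow> real) \<Rightarrow> real"
  assumes u: "u < n" and "\<And>x. x \<in> cube n \<Longrightarrow> G1 x + G1 (flp u x) = G2 x + G2 (flp u x)"
  shows "(\<Sum>x\<in>cube n. G1 x) = (\<Sum>x\<in>cube n. G2 x)"
proof -
  have "2 * (\<Sum>x\<in>cube n. G1 x) = (\<Sum>x\<in>cube n. G1 x) + (\<Sum>x\<in>cube n. G1 (flp u x))"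
    using sum_flip[OF u, of G1] by simp
  also have "\<dots> = (\<Sum>x\<in>cube n. G1 x + G1 (flp u x))" by (simp add: sum.distrib)
  also have "\<dots> = (\<Sum>x\<in>cube n. G2 x + G2 (flp u x))" using assms(2) by (rule sum.cong[OF refl])
  also have "\<dots> = (\<Sum>x\<in>cube n. G2 x) + (\<Sum>x\<in>cube n. G2 (flp u x))" by (simp add: sum.distrib)
  also have "\<dots> = 2 * (\<Sum>x\<in>cube n. G2 x)" using sum_flip[OF u, of G2] by simp
  finally show ?thesis by simp
qed



lemma chi_abs: "x \<in> cube n \<Longrightarrow> \<bar>chi T x\<bar> \<le> 1"
  unfolding chi_def abs_prod by (intro prod_le_1) (auto simp: cube_abs)

lemma chi_upd_in: "finite T \<Longrightarrow> u \<in> T \<Longrightarrow> chi T (x(u := v)) = v * chi (T - {u}) x"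
  unfolding chi_def by (subst prod.remove[of T u]) (auto intro!: prod.cong)

lemma chi_upd_notin: "u \<notin> T \<Longrightarrow> chi T (x(u := v)) = chi T x"
  unfolding chi_def by (intro prod.cong) auto

lemma chi_flip: "finite T \<Longrightarrow> u \<in> T \<Longrightarrow> chi T (flp u x) = - chi T x"
proof -
  assume T: "finite T" "u \<in> T"
  have "chi T (flp u x) = - x u * chi (T - {u}) x" unfolding flp_def using chi_upd_in[OF T] by simp
  also have "chi T x = x u * chi (T - {u}) x" unfolding chi_def using T by (subst prod.remove[of T u]) auto
  ultimately show ?thesis by simp
qed



lemma weight_sum:
  assumes x: "x \<in> cube n"
  shows "(\<Sum>y\<in>cube m. rbm_weight n m J h g x y) = exp (rbm_f n m J h g x)"
proof -
  define c where "c = (\<lambda>j. (\<Sum>i<n. J i j * x i) + g j)"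
  have w: "rbm_weight n m J h g x y = exp (\<Sum>i<n. h i * x i) * (\<Prod>j<m. exp (y j * c j))" for y
  proof -
    have "(\<Sum>i<n. \<Sum>j<m. x i * J i j * y j) + (\<Sum>j<m. g j * y j) = (\<Sum>j<m. y j * c j)"
      unfolding c_def by (subst sum.swap) (simp add: sum.distrib[symmetric] sum_distrib_left algebra_simps)
    hence "rbm_weight n m J h g x y = exp ((\<Sum>i<n. h i * x i) + (\<Sum>j<m. y j * c j))"
      unfolding rbm_weight_def by (simp add: algebra_simps)
    thus ?thesis by (simp add: exp_add exp_sum)
  qed
  have "(\<Sum>y\<in>cube m. rbm_weight n m J h g x y) = exp (\<Sum>i<n. h i * x i) * (\<Sum>y\<in>cube m. \<Prod>j<m. exp (y j * c j))"
    unfolding w by (simp add: sum_distrib_left)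
  also have "(\<Sum>y\<in>cube m. \<Prod>j<m. exp (y j * c j)) = (\<Prod>j<m. exp (c j) + exp (- c j))"
    using sum_cube_prod[where m=m and F="\<lambda>j e. exp (e * c j)"] by simp
  also have "\<dots> = (\<Prod>j<m. exp (rho (c j)))"
    unfolding rho_def by (intro prod.cong refl) (simp add: add_pos_pos)
  also have "\<dots> = exp (\<Sum>j<m. rho (c j))" by (simp add: exp_sum)
  finally show ?thesis unfolding rbm_f_def c_def by (simp add: exp_add mult.commute)
qed

lemma Z_pos: "rbm_Z n m J h g > 0"
  unfolding rbm_Z_def rbm_weight_def
  by (intro sum_pos cube_finite cube_ne) auto

lemma marg_exp: "x \<in> cube n \<Longrightarrow> rbm_marg n m J h g x = exp (rbm_f n m J h g x) / rbm_Z n m J h g"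
  unfolding rbm_marg_def by (simp add: weight_sum)

lemma marg_pos: "x \<in> cube n \<Longrightarrow> rbm_marg n m J h g x > 0"
  using Z_pos by (simp add: marg_exp)

lemma marg_sum: "(\<Sum>x\<in>cube n. rbm_marg n m J h g x) = 1"
  unfolding rbm_marg_def using Z_pos[of n m J h g] by (simp add: sum_divide_distrib[symmetric] rbm_Z_def)

lemma cond_sigmoid:
  assumes x: "x \<in> cube n" and u: "u < n"
  shows "rbm_cond n m J h g u x = sigmoid (rbm_f n m J h g (x(u := 1)) - rbm_f n m J h g (x(u := -1)))"
proof -
  have x1: "x(u := 1) \<in> cube n" and x2: "x(u := -1) \<in> cube n" using cube_upd[OF x u] by auto
  define a where "a = rbm_f n m J h g (x(u := 1))"
  define b where "b = rbm_f n m J h g (x(u := -1))"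
  define Z where "Z = rbm_Z n m J h g"
  have Z: "Z > 0" unfolding Z_def by (rule Z_pos)
  have "rbm_cond n m J h g u x = (exp a / Z) / (exp a / Z + exp b / Z)"
    unfolding rbm_cond_def marg_exp[OF x1] marg_exp[OF x2] a_def b_def Z_def ..
  also have "\<dots> = exp a / (exp a + exp b)" using Z by (simp add: field_simps)
  also have "\<dots> = 1 / (1 + exp (- (a - b)))"
    by (simp add: field_simps exp_diff exp_minus add_pos_pos)
  finally show ?thesis unfolding sigmoid_def a_def b_def .
qed


lemma sum_pow_prod: "finite A \<Longrightarrow> (\<Sum>T\<in>Pow A. \<Prod>i\<in>T. (c i::real)) = (\<Prod>i\<in>A. 1 + c i)"
  using prod_add[of A c "\<lambda>_. 1"] by (simp add: add.commute)

lemma kernel: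
  assumes x: "x \<in> cube n" and y: "y \<in> cube n"
  shows "(\<Sum>T\<in>Pow {0..<n}. chi T y * chi T x) = (if y = x then 2^n else 0)"
proof -
  have "(\<Sum>T\<in>Pow {0..<n}. chi T y * chi T x) = (\<Sum>T\<in>Pow {0..<n}. \<Prod>i\<in>T. y i * x i)"
    unfolding chi_def by (simp add: prod.distrib)
  also have "\<dots> = (\<Prod>i\<in>{0..<n}. 1 + y i * x i)" by (rule sum_pow_prod) simp
  also have "\<dots> = (if y = x then 2^n else 0)"
  proof (cases "y = x")
    case True
    have "(\<Prod>i\<in>{0..<n}. 1 + y i * x i) = (\<Prod>i\<in>{0..<n}. (2::real))"
    proof (intro prod.cong refl)
      fix i assume "i \<in> {0..<n}"
      hence "x i = 1 \<or> x i = -1" using cube_vals[OF x] by auto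
      thus "1 + y i * x i = 2" using True by auto
    qed
    thus ?thesis using True by simp
  next
    case False
    then obtain i where "y i \<noteq> x i" by auto
    moreover have "i < n"
    proof (rule ccontr)
      assume "\<not> i < n" hence "n \<le> i" by simp
      thus False using calculation cube_out[OF x] cube_out[OF y] by metis
    qed
    ultimately have "1 + y i * x i = 0" using cube_vals[OF x] cube_vals[OF y] by force
    hence "(\<Prod>i\<in>{0..<n}. 1 + y i * x i) = 0" using \<open>i < n\<close> by (intro prod_zero) auto
    thus ?thesis using False by simp
  qed
  finally show ?thesis .
qed

lemma fourier_inv:
  fixes Fn :: "(nat \<Rightarrow> real) \<Rightarrow> real"
  assumes x: "x \<in> cube n"
  shows "Fn x = (\<Sum>T\<in>Pow {0..<n}. ((\<Sum>y\<in>cube n. Fn y * chi T y) / 2^n) * chi T x)"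
proof -
  have "(\<Sum>T\<in>Pow {0..<n}. ((\<Sum>y\<in>cube n. Fn y * chi T y) / 2^n) * chi T x)
      = (1/2^n) * (\<Sum>y\<in>cube n. Fn y * (\<Sum>T\<in>Pow {0..<n}. chi T y * chi T x))"
    by (simp add: sum_distrib_left sum_distrib_right sum_divide_distrib mult_ac sum.swap[of _ "Pow {0..<n}"])
  also have "\<dots> = (1/2^n) * (\<Sum>y\<in>cube n. Fn y * (if y = x then 2^n else 0))"
    using kernel[OF x] by simp
  also have "\<dots> = Fn x" using x cube_finite[of n] by (simp add: sum.delta' if_distrib cong: if_cong)
  finally show ?thesis by simp
qed

lemma fhat_inv: "x \<in> cube n \<Longrightarrow> rbm_f n m J h g x = (\<Sum>T\<in>Pow {0..<n}. fhat n m J h g T * chi T x)"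
  unfolding fhat_def by (rule fourier_inv)

definition astar :: "nat \<Rightarrow> nat \<Rightarrow> (nat \<Rightarrow> nat \<Rightarrow> real) \<Rightarrow> (nat \<Rightarrow> real) \<Rightarrow> (nat \<Rightarrow> real) \<Rightarrow> nat \<Rightarrow> (nat \<Rightarrow> real) \<Rightarrow> real" where
  "astar n m J h g u x = 2 * (\<Sum>T\<in>{T\<in>Pow {0..<n}. u \<in> T}. fhat n m J h g T * chi (T - {u}) x)"

lemma logit_formula:
  assumes x: "x \<in> cube n" and u: "u < n"
  shows "rbm_f n m J h g (x(u := 1)) - rbm_f n m J h g (x(u := -1)) = astar n m J h g u x"
proof -
  have x1: "x(u := 1) \<in> cube n" and x2: "x(u := -1) \<in> cube n" using cube_upd[OF x u] by auto
  have "rbm_f n m J h g (x(u := 1)) - rbm_f n m J h g (x(u := -1))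
      = (\<Sum>T\<in>Pow {0..<n}. fhat n m J h g T * (chi T (x(u := 1)) - chi T (x(u := -1))))"
    unfolding fhat_inv[OF x1] fhat_inv[OF x2] by (simp add: sum_subtractf[symmetric] algebra_simps)
  also have "\<dots> = (\<Sum>T\<in>Pow {0..<n}. if u \<in> T then 2 * (fhat n m J h g T * chi (T - {u}) x) else 0)"
  proof (intro sum.cong refl)
    fix T assume T: "T \<in> Pow {0..<n}"
    hence fT: "finite T" by (auto intro: finite_subset)
    show "fhat n m J h g T * (chi T (x(u := 1)) - chi T (x(u := -1)))
        = (if u \<in> T then 2 * (fhat n m J h g T * chi (T - {u}) x) else 0)"
      using chi_upd_in[OF fT] chi_upd_notin by auto
  qed
  also have "\<dots> = (\<Sum>T\<in>{T\<in>Pow {0..<n}. u \<in> T}. 2 * (fhat n m J h g T * chi (T - {u}) x))"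
    by (rule sum.inter_filter[symmetric]) simp
  also have "\<dots> = 2 * (\<Sum>T\<in>{T\<in>Pow {0..<n}. u \<in> T}. fhat n m J h g T * chi (T - {u}) x)"
    by (rule sum_distrib_left[symmetric])
  finally show ?thesis unfolding astar_def .
qed

lemma cond_astar: "x \<in> cube n \<Longrightarrow> u < n \<Longrightarrow> rbm_cond n m J h g u x = sigmoid (astar n m J h g u x)"
  using cond_sigmoid logit_formula by metis

lemma astar_upd: "astar n m J h g u (x(u := v)) = astar n m J h g u x"
  unfolding astar_def by (intro arg_cong[where f="\<lambda>z. 2 * z"] sum.cong refl arg_cong2[where f="(*)"] chi_upd_notin) auto

lemma gamma_ge: "u < n \<Longrightarrow> (\<Sum>T\<in>{T. T \<subseteq> {0..<n} \<and> u \<in> T}. \<bar>fhat n m J h g T\<bar>) \<le> rbm_gamma n m J h g"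
  unfolding rbm_gamma_def by (intro Max_ge) auto

lemma gamma_nonneg: "rbm_gamma n m J h g \<ge> 0"
  unfolding rbm_gamma_def by (intro Max_ge) auto

lemma astar_abs:
  assumes x: "x \<in> cube n" and u: "u < n"
  shows "\<bar>astar n m J h g u x\<bar> \<le> 2 * rbm_gamma n m J h g"
proof -
  have "\<bar>\<Sum>T\<in>{T\<in>Pow {0..<n}. u \<in> T}. fhat n m J h g T * chi (T - {u}) x\<bar>
      \<le> (\<Sum>T\<in>{T\<in>Pow {0..<n}. u \<in> T}. \<bar>fhat n m J h g T\<bar>)"
    by (rule order_trans[OF sum_abs sum_mono]) (auto simp: abs_mult intro: mult_left_le chi_abs[OF x])
  also have "\<dots> \<le> rbm_gamma n m J h g" using gamma_ge[OF u] by (simp add: Pow_def)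
  finally show ?thesis unfolding astar_def by simp
qed


lemma flip_zero:
  fixes Fn :: "(nat \<Rightarrow> real) \<Rightarrow> real"
  assumes T: "finite T" "i \<in> T" and i: "i < n" and inv: "\<forall>x\<in>cube n. Fn (flp i x) = Fn x"
  shows "(\<Sum>x\<in>cube n. Fn x * chi T x) = 0"
proof -
  have "(\<Sum>x\<in>cube n. Fn x * chi T x) = (\<Sum>x\<in>cube n. Fn (flp i x) * chi T (flp i x))"
    using sum_flip[OF i, of "\<lambda>x. Fn x * chi T x"] by simp
  also have "\<dots> = (\<Sum>x\<in>cube n. - (Fn x * chi T x))"
    using inv chi_flip[OF T] by (intro sum.cong refl) auto
  finally show ?thesis by (simp add: sum_negf)
qed

lemma fhat_zero:
  assumes T: "T \<subseteq> {0..<n}" and ab: "a \<in> T" "b \<in> T" "a \<noteq> b"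
    and nsub: "\<forall>j<m. \<not> T \<subseteq> {i. i < n \<and> J i j \<noteq> 0}"
  shows "fhat n m J h g T = 0"
proof -
  have fT: "finite T" using T by (rule finite_subset) simp
  define c where "c = (\<lambda>j x. (\<Sum>i<n. J i j * x i) + g j)"
  have "(\<Sum>x\<in>cube n. rbm_f n m J h g x * chi T x)
      = (\<Sum>j<m. \<Sum>x\<in>cube n. rho (c j x) * chi T x) + (\<Sum>i<n. h i * (\<Sum>x\<in>cube n. x i * chi T x))"
  proof -
    have e1: "\<And>x. rbm_f n m J h g x * chi T x = (\<Sum>j<m. rho (c j x) * chi T x) + (\<Sum>i<n. h i * (x i * chi T x))"
      unfolding rbm_f_def c_def by (simp add: distrib_right sum_distrib_right mult.assoc)
    have "(\<Sum>x\<in>cube n. rbm_f n m J h g x * chi T x)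
        = (\<Sum>x\<in>cube n. \<Sum>j<m. rho (c j x) * chi T x) + (\<Sum>x\<in>cube n. \<Sum>i<n. h i * (x i * chi T x))"
      unfolding e1 by (rule sum.distrib)
    also have "(\<Sum>x\<in>cube n. \<Sum>j<m. rho (c j x) * chi T x) = (\<Sum>j<m. \<Sum>x\<in>cube n. rho (c j x) * chi T x)"
      by (rule sum.swap)
    also have "(\<Sum>x\<in>cube n. \<Sum>i<n. h i * (x i * chi T x)) = (\<Sum>i<n. \<Sum>x\<in>cube n. h i * (x i * chi T x))"
      by (rule sum.swap)
    also have "\<dots> = (\<Sum>i<n. h i * (\<Sum>x\<in>cube n. x i * chi T x))"
      by (simp add: sum_distrib_left)
    finally show ?thesis .
  qed
  also have "(\<Sum>j<m. \<Sum>x\<in>cube n. rho (c j x) * chi T x) = 0"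
  proof (rule sum.neutral, rule ballI)
    fix j assume "j \<in> {..<m}"
    with nsub obtain i where i: "i \<in> T" "\<not> (i < n \<and> J i j \<noteq> 0)" by auto
    have "i < n" using i T by auto
    with i have J0: "J i j = 0" by simp
    have inv: "\<forall>x\<in>cube n. rho (c j (flp i x)) = rho (c j x)"
    proof
      fix x
      have "(\<Sum>k<n. J k j * flp i x k) = (\<Sum>k<n. J k j * x k)"
        unfolding flp_def using J0 by (intro sum.cong refl) auto
      thus "rho (c j (flp i x)) = rho (c j x)" unfolding c_def by simp
    qed
    show "(\<Sum>x\<in>cube n. rho (c j x) * chi T x) = 0"
      using flip_zero[OF fT i(1) \<open>i < n\<close>, where Fn="\<lambda>x. rho (c j x)"] inv by simp
  qed
  also have "(\<Sum>i<n. h i * (\<Sum>x\<in>cube n. x i * chi T x)) = 0"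
  proof (rule sum.neutral, rule ballI)
    fix i assume "i \<in> {..<n}"
    obtain i' where i': "i' \<in> T" "i' \<noteq> i" using ab by blast
    have "i' < n" using i' T by auto
    have inv: "\<forall>x\<in>cube n. flp i' x i = x i" using i' by (auto simp: flp_def)
    have "(\<Sum>x\<in>cube n. x i * chi T x) = 0"
      using flip_zero[OF fT i'(1) \<open>i' < n\<close>, where Fn="\<lambda>x. x i"] inv by simp
    thus "h i * (\<Sum>x\<in>cube n. x i * chi T x) = 0" by simp
  qed
  finally show ?thesis unfolding fhat_def by simp
qed

lemma card_small_subsets:
  assumes A: "finite (A::nat set)"
  shows "card {S. S \<subseteq> A \<and> S \<noteq> {} \<and> card S \<le> d} \<le> card A ^ d"
proof -
  define Fam where "Fam = {S. S \<subseteq> A \<and> S \<noteq> {} \<and> card S \<le> d}"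
  define gg :: "nat set \<Rightarrow> nat \<Rightarrow> nat" where "gg = (\<lambda>S i. if i < d then (if i < length (sorted_list_of_set S) then sorted_list_of_set S ! i
                                  else sorted_list_of_set S ! 0) else undefined)"
  have props: "gg S \<in> PiE {..<d} (\<lambda>_. A) \<and> gg S ` {..<d} = S" if S: "S \<in> Fam" for S
  proof -
    define l where "l = sorted_list_of_set S"
    have fS: "finite S" using S A unfolding Fam_def by (auto intro: finite_subset)
    have sl: "set l = S" "length l = card S" unfolding l_def using fS by auto
    have ne: "l \<noteq> []" using sl S unfolding Fam_def by auto
    have ld: "length l \<le> d" using sl S unfolding Fam_def by auto
    have im: "gg S ` {..<d} = S"
    proof
      show "gg S ` {..<d} \<subseteq> S"
      proof
        fix z assume "z \<in> gg S ` {..<d}"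
        then obtain i where i: "i < d" "z = gg S i" by auto
        have "0 < length l" using ne by simp
        hence "z \<in> set l" using i unfolding gg_def l_def[symmetric] by (auto intro: nth_mem)
        thus "z \<in> S" using sl by simp
      qed
      show "S \<subseteq> gg S ` {..<d}"
      proof
        fix z assume "z \<in> S"
        then obtain k where k: "k < length l" "l ! k = z" using sl by (metis in_set_conv_nth)
        hence "gg S k = z" "k < d" unfolding gg_def l_def[symmetric] using ld by auto
        thus "z \<in> gg S ` {..<d}" by force
      qed
    qed
    moreover have "gg S \<in> PiE {..<d} (\<lambda>_. A)"
    proof -
      have "\<forall>i\<in>{..<d}. gg S i \<in> A" using im S unfolding Fam_def by blast
      moreover have "gg S \<in> extensional {..<d}" by (simp add: gg_def extensional_def)
      ultimately show ?thesis by (simp add: PiE_iff)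
    qed
    ultimately show ?thesis by simp
  qed
  have inj: "inj_on gg Fam"
  proof (rule inj_onI)
    fix S1 S2 assume S: "S1 \<in> Fam" "S2 \<in> Fam" "gg S1 = gg S2"
    have "S1 = gg S1 ` {..<d}" using props[OF S(1)] by simp
    also have "\<dots> = gg S2 ` {..<d}" using S(3) by simp
    also have "\<dots> = S2" using props[OF S(2)] by simp
    finally show "S1 = S2" .
  qed
  have "card Fam \<le> card (PiE {..<d} (\<lambda>_. A))"
    by (rule card_inj_on_le[OF inj]) (use props A in \<open>auto simp: finite_PiE\<close>)
  also have "\<dots> = card A ^ d" by (simp add: card_PiE)
  finally show ?thesis unfolding Fam_def .
qed

lemma D_ge: "u < n \<Longrightarrow> card (mrf_nbhd n m J h g u) \<le> rbm_D n m J h g"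
  unfolding rbm_D_def by (intro Max_ge) auto

lemma d_ge: "j < m \<Longrightarrow> card {i. i < n \<and> J i j \<noteq> 0} \<le> rbm_d n m J"
  unfolding rbm_d_def by (intro Max_ge) auto

lemma nbhd_sub: "mrf_nbhd n m J h g u \<subseteq> {0..<n}"
  unfolding mrf_nbhd_def by auto

lemma nbhd_notu: "u \<notin> mrf_nbhd n m J h g u"
  unfolding mrf_nbhd_def by auto

definition MSs :: "nat \<Rightarrow> nat \<Rightarrow> nat set \<Rightarrow> nat set set" where
  "MSs n u N = {T\<in>Pow {0..<n}. u \<in> T \<and> \<not> (T - {u} \<subseteq> N)}"

lemma missing_bound:
  assumes u: "u < n" and N: "N \<subseteq> mrf_nbhd n m J h g u" and z0: "\<zeta> \<ge> 0"
    and hyp: "\<forall>i. i < n \<and> i \<noteq> u \<and> (\<exists>T. T \<subseteq> {0..<n} \<and> u \<in> T \<and> i \<in> T \<and> \<bar>fhat n m J h g T\<bar> \<ge> \<zeta>) \<longrightarrow> i \<in> N"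
  shows "(\<Sum>T\<in>MSs n u N. \<bar>fhat n m J h g T\<bar>) \<le> \<zeta> * real (rbm_D n m J h g ^ rbm_d n m J)"
proof -
  define NZ where "NZ = {T\<in>MSs n u N. fhat n m J h g T \<noteq> 0}"
  define nb where "nb = mrf_nbhd n m J h g u"
  have finMS: "finite (MSs n u N)" unfolding MSs_def by simp
  have "(\<Sum>T\<in>MSs n u N. \<bar>fhat n m J h g T\<bar>) = (\<Sum>T\<in>NZ. \<bar>fhat n m J h g T\<bar>)"
    unfolding NZ_def by (rule sum.mono_neutral_right[OF finMS]) auto
  also have "\<dots> \<le> (\<Sum>T\<in>NZ. \<zeta>)"
  proof (rule sum_mono)
    fix T assume T: "T \<in> NZ"
    then obtain i where i: "i \<in> T" "i \<noteq> u" "i \<notin> N" unfolding NZ_def MSs_def by auto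
    have Tn: "T \<subseteq> {0..<n}" "u \<in> T" using T unfolding NZ_def MSs_def by auto
    have "i < n" using i Tn by auto
    show "\<bar>fhat n m J h g T\<bar> \<le> \<zeta>"
    proof (rule ccontr)
      assume "\<not> \<bar>fhat n m J h g T\<bar> \<le> \<zeta>"
      hence ex: "\<exists>T'. T' \<subseteq> {0..<n} \<and> u \<in> T' \<and> i \<in> T' \<and> \<bar>fhat n m J h g T'\<bar> \<ge> \<zeta>"
        using Tn i by (intro exI[of _ T]) auto
      have "i < n \<and> i \<noteq> u \<and> (\<exists>T'. T' \<subseteq> {0..<n} \<and> u \<in> T' \<and> i \<in> T' \<and> \<bar>fhat n m J h g T'\<bar> \<ge> \<zeta>) \<longrightarrow> i \<in> N"
        using hyp by (rule spec)
      hence "i \<in> N" using ex \<open>i < n\<close> i(2) by blast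
      thus False using i by simp
    qed
  qed
  also have "\<dots> = \<zeta> * real (card NZ)" by simp
  also have "card NZ \<le> rbm_D n m J h g ^ rbm_d n m J"
  proof -
    have inj: "inj_on (\<lambda>T. T - {u}) NZ"
    proof (rule inj_onI)
      fix T1 T2 assume T: "T1 \<in> NZ" "T2 \<in> NZ" "T1 - {u} = T2 - {u}"
      have "u \<in> T1" "u \<in> T2" using T unfolding NZ_def MSs_def by auto
      thus "T1 = T2" using T(3) by (metis insert_Diff)
    qed
    have sub: "(\<lambda>T. T - {u}) ` NZ \<subseteq> {S. S \<subseteq> nb \<and> S \<noteq> {} \<and> card S \<le> rbm_d n m J}"
    proof (clarify)
      fix T assume T: "T \<in> NZ"
      have Tn: "T \<subseteq> {0..<n}" "u \<in> T" "\<not> T - {u} \<subseteq> N" "fhat n m J h g T \<noteq> 0"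
        using T unfolding NZ_def MSs_def by auto
      show "T - {u} \<subseteq> nb \<and> T - {u} \<noteq> {} \<and> card (T - {u}) \<le> rbm_d n m J"
      proof (intro conjI)
        show "T - {u} \<subseteq> nb"
        proof
          fix i assume i: "i \<in> T - {u}"
          have "i < n" using i Tn by auto
          moreover have "\<exists>T'. T' \<subseteq> {0..<n} \<and> u \<in> T' \<and> i \<in> T' \<and> fhat n m J h g T' \<noteq> 0"
            using Tn i by (intro exI[of _ T]) auto
          ultimately show "i \<in> nb" unfolding nb_def mrf_nbhd_def using i by blast
        qed
        show "T - {u} \<noteq> {}" using Tn by auto
        then obtain i where i: "i \<in> T" "i \<noteq> u" by auto
        have "\<exists>j<m. T \<subseteq> {i. i < n \<and> J i j \<noteq> 0}"
          using fhat_zero[OF Tn(1) Tn(2) i(1) i(2)[symmetric]] Tn(4) by blast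
        then obtain j where j: "j < m" "T \<subseteq> {i. i < n \<and> J i j \<noteq> 0}" by blast
        have "card (T - {u}) \<le> card T" using Tn by (intro card_mono) (auto intro: finite_subset)
        also have "\<dots> \<le> card {i. i < n \<and> J i j \<noteq> 0}" using j by (intro card_mono) auto
        also have "\<dots> \<le> rbm_d n m J" using d_ge[OF j(1)] .
        finally show "card (T - {u}) \<le> rbm_d n m J" .
      qed
    qed
    have finnb: "finite nb" unfolding nb_def using nbhd_sub by (rule finite_subset) simp
    have "card NZ = card ((\<lambda>T. T - {u}) ` NZ)" using inj by (simp add: card_image)
    also have "\<dots> \<le> card {S. S \<subseteq> nb \<and> S \<noteq> {} \<and> card S \<le> rbm_d n m J}"
      by (rule card_mono[OF _ sub]) (use finnb in simp)
    also have "\<dots> \<le> card nb ^ rbm_d n m J" by (rule card_small_subsets[OF finnb])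
    also have "\<dots> \<le> rbm_D n m J h g ^ rbm_d n m J"
      unfolding nb_def by (intro power_mono D_ge u) simp
    finally show ?thesis .
  qed
  hence "\<zeta> * real (card NZ) \<le> \<zeta> * real (rbm_D n m J h g ^ rbm_d n m J)"
    using z0 by (intro mult_left_mono) (simp_all only: of_nat_le_iff)
  finally show ?thesis .
qed


definition Lexp :: "nat \<Rightarrow> nat \<Rightarrow> (nat \<Rightarrow> nat \<Rightarrow> real) \<Rightarrow> (nat \<Rightarrow> real) \<Rightarrow> (nat \<Rightarrow> real) \<Rightarrow> nat \<Rightarrow> ((nat \<Rightarrow> real) \<Rightarrow> real) \<Rightarrow> real" where
  "Lexp n m J h g u bb = (\<Sum>x\<in>cube n. rbm_marg n m J h g x * lg (x u * bb x))"

lemma pairing: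
  assumes u: "u < n" and inv: "\<And>x v. bb (x(u := v)) = bb x"
  shows "Lexp n m J h g u bb = (\<Sum>x\<in>cube n. rbm_marg n m J h g x * HH (rbm_cond n m J h g u x) (bb x))"
  unfolding Lexp_def
proof (rule sum_pairing[OF u])
  fix x assume x: "x \<in> cube n"
  define mp where "mp = rbm_marg n m J h g (x(u := 1))"
  define mm where "mm = rbm_marg n m J h g (x(u := -1))"
  have pos: "mp > 0" "mm > 0" unfolding mp_def mm_def using marg_pos cube_upd[OF x u] by auto
  have cnd: "rbm_cond n m J h g u x = mp / (mp + mm)" unfolding rbm_cond_def mp_def mm_def ..
  have cndf: "rbm_cond n m J h g u (flp u x) = mp / (mp + mm)" unfolding rbm_cond_def mp_def mm_def flp_def by simp
  have bf: "bb (flp u x) = bb x" unfolding flp_def by (rule inv)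
  have key: "(mp + mm) * HH (mp / (mp + mm)) c = mp * lg c + mm * lg (- c)" for c
  proof -
    have s: "mp + mm \<noteq> 0" using pos by simp
    have e1: "(mp + mm) * (mp / (mp + mm)) = mp" using s by simp
    have e2: "(mp + mm) * (1 - mp / (mp + mm)) = mm" using s by (simp add: field_simps)
    have "(mp + mm) * HH (mp / (mp + mm)) c = ((mp + mm) * (mp / (mp + mm))) * lg c + ((mp + mm) * (1 - mp / (mp + mm))) * lg (- c)"
      unfolding HH_def by (simp add: algebra_simps)
    thus ?thesis unfolding e1 e2 .
  qed
  consider "x u = 1" | "x u = -1" using cube_vals[OF x u] by auto
  thus "rbm_marg n m J h g x * lg (x u * bb x) + rbm_marg n m J h g (flp u x) * lg (flp u x u * bb (flp u x))
      = rbm_marg n m J h g x * HH (rbm_cond n m J h g u x) (bb x) + rbm_marg n m J h g (flp u x) * HH (rbm_cond n m J h g u (flp u x)) (bb (flp u x))"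
  proof cases
    case 1
    have "x = x(u := 1)" using 1 by auto
    hence mx: "rbm_marg n m J h g x = mp" unfolding mp_def by simp
    have mf: "rbm_marg n m J h g (flp u x) = mm" unfolding mm_def flp_def using 1 by simp
    have "flp u x u = -1" using 1 by (simp add: flp_def)
    thus ?thesis unfolding mx mf cnd cndf bf using 1 key[of "bb x"] by (simp add: algebra_simps)
  next
    case 2
    have "x = x(u := -1)" using 2 by auto
    hence mx: "rbm_marg n m J h g x = mm" unfolding mm_def by simp
    have mf: "rbm_marg n m J h g (flp u x) = mp" unfolding mp_def flp_def using 2 by simp
    have "flp u x u = 1" using 2 by (simp add: flp_def)
    thus ?thesis unfolding mx mf cnd cndf bf using 2 key[of "bb x"] by (simp add: algebra_simps)
  qed
qed

lemma feat_upd: "u \<notin> N \<Longrightarrow> feat_dot N w (x(u := v)) = feat_dot N w x"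
  unfolding feat_dot_def by (intro sum.cong refl arg_cong2[where f="(*)"] chi_upd_notin) auto

lemma feat_abs: "x \<in> cube n \<Longrightarrow> \<bar>feat_dot N w x\<bar> \<le> l1norm N w"
  unfolding feat_dot_def l1norm_def
  by (rule order_trans[OF sum_abs sum_mono]) (auto simp: abs_mult intro: mult_left_le chi_abs)

definition wstar :: "nat \<Rightarrow> nat \<Rightarrow> (nat \<Rightarrow> nat \<Rightarrow> real) \<Rightarrow> (nat \<Rightarrow> real) \<Rightarrow> (nat \<Rightarrow> real) \<Rightarrow> nat \<Rightarrow> nat set \<Rightarrow> real" where
  "wstar n m J h g u S = 2 * fhat n m J h g (insert u S)"

definition INs :: "nat \<Rightarrow> nat \<Rightarrow> nat set \<Rightarrow> nat set set" where
  "INs n u N = {T\<in>Pow {0..<n}. u \<in> T \<and> T - {u} \<subseteq> N}"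

lemma reindex_IN:
  assumes u: "u < n" and N: "N \<subseteq> {0..<n}" "u \<notin> N"
  shows "(\<Sum>S\<in>Pow N. F (insert u S) S) = (\<Sum>T\<in>INs n u N. F T (T - {u}))"
proof (rule sum.reindex_bij_witness[of _ "\<lambda>T. T - {u}" "insert u"])
  fix S assume "S \<in> Pow N"
  hence S: "S \<subseteq> N" by simp
  show "insert u S \<in> INs n u N" unfolding INs_def using S N u by auto
  show "insert u S - {u} = S" using S N by auto
  hence "insert u S - {u} = S" .
  thus "F (insert u S) (insert u S - {u}) = F (insert u S) S" by simp
next
  fix T assume "T \<in> INs n u N"
  thus "insert u (T - {u}) = T" "T - {u} \<in> Pow N" unfolding INs_def by auto
qed

lemma feat_wstar:
  assumes u: "u < n" and N: "N \<subseteq> {0..<n}" "u \<notin> N"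
  shows "feat_dot N (wstar n m J h g u) x = 2 * (\<Sum>T\<in>INs n u N. fhat n m J h g T * chi (T - {u}) x)"
proof -
  have "feat_dot N (wstar n m J h g u) x = (\<Sum>S\<in>Pow N. 2 * (fhat n m J h g (insert u S) * chi S x))"
    unfolding feat_dot_def wstar_def by (simp add: mult.assoc)
  also have "\<dots> = (\<Sum>T\<in>INs n u N. 2 * (fhat n m J h g T * chi (T - {u}) x))"
    using reindex_IN[OF assms, of "\<lambda>T S. 2 * (fhat n m J h g T * chi S x)"] by simp
  finally show ?thesis by (simp add: sum_distrib_left)
qed

lemma l1_wstar:
  assumes u: "u < n" and N: "N \<subseteq> {0..<n}" "u \<notin> N"
  shows "l1norm N (wstar n m J h g u) \<le> 2 * rbm_gamma n m J h g"
proof -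
  have "l1norm N (wstar n m J h g u) = (\<Sum>S\<in>Pow N. 2 * \<bar>fhat n m J h g (insert u S)\<bar>)"
    unfolding l1norm_def wstar_def by (simp add: abs_mult)
  also have "\<dots> = (\<Sum>T\<in>INs n u N. 2 * \<bar>fhat n m J h g T\<bar>)"
    using reindex_IN[OF assms, of "\<lambda>T S. 2 * \<bar>fhat n m J h g T\<bar>"] by simp
  also have "\<dots> = 2 * (\<Sum>T\<in>INs n u N. \<bar>fhat n m J h g T\<bar>)" by (simp add: sum_distrib_left)
  also have "(\<Sum>T\<in>INs n u N. \<bar>fhat n m J h g T\<bar>) \<le> (\<Sum>T\<in>{T. T \<subseteq> {0..<n} \<and> u \<in> T}. \<bar>fhat n m J h g T\<bar>)"
    by (rule sum_mono2) (auto simp: INs_def)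
  also have "\<dots> \<le> rbm_gamma n m J h g" by (rule gamma_ge[OF u])
  finally show ?thesis by simp
qed

lemma bias:
  assumes u: "u < n" and N: "N \<subseteq> {0..<n}" "u \<notin> N" and x: "x \<in> cube n"
  shows "\<bar>astar n m J h g u x - feat_dot N (wstar n m J h g u) x\<bar> \<le> 2 * (\<Sum>T\<in>MSs n u N. \<bar>fhat n m J h g T\<bar>)"
proof -
  have U: "{T\<in>Pow {0..<n}. u \<in> T} = INs n u N \<union> MSs n u N" unfolding INs_def MSs_def by auto
  have dj: "INs n u N \<inter> MSs n u N = {}" unfolding INs_def MSs_def by auto
  have fin: "finite (INs n u N)" "finite (MSs n u N)" unfolding INs_def MSs_def by auto
  have "astar n m J h g u x = 2 * (\<Sum>T\<in>INs n u N. fhat n m J h g T * chi (T - {u}) x)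
                            + 2 * (\<Sum>T\<in>MSs n u N. fhat n m J h g T * chi (T - {u}) x)"
    unfolding astar_def U by (simp add: sum.union_disjoint[OF fin dj] algebra_simps)
  hence "astar n m J h g u x - feat_dot N (wstar n m J h g u) x = 2 * (\<Sum>T\<in>MSs n u N. fhat n m J h g T * chi (T - {u}) x)"
    unfolding feat_wstar[OF u N] by simp
  moreover have "\<bar>\<Sum>T\<in>MSs n u N. fhat n m J h g T * chi (T - {u}) x\<bar> \<le> (\<Sum>T\<in>MSs n u N. \<bar>fhat n m J h g T\<bar>)"
    by (rule order_trans[OF sum_abs sum_mono]) (auto simp: abs_mult intro: mult_left_le chi_abs[OF x])
  ultimately show ?thesis by simp
qed

lemma zeta_bound:
  fixes \<zeta> \<epsilon> \<gamma> Dd :: real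
  assumes z: "\<zeta> > 0" and e: "\<epsilon> > 0" and g: "\<gamma> \<ge> 0" and Dd: "Dd \<ge> 0"
    and le: "\<zeta> \<le> sqrt \<epsilon> / (Dd * sqrt (1 + exp (2 * \<gamma>)))"
  shows "(\<zeta> * Dd)^2 \<le> \<epsilon> / 2"
proof -
  have Dd0: "Dd > 0"
  proof (rule ccontr)
    assume "\<not> Dd > 0" hence "Dd = 0" using Dd by simp
    thus False using le z by simp
  qed
  have q: "sqrt (1 + exp (2 * \<gamma>)) > 0" by (simp add: add_pos_pos)
  have "\<zeta> * (Dd * sqrt (1 + exp (2 * \<gamma>))) \<le> sqrt \<epsilon>"
    using le Dd0 q by (simp add: field_simps)
  hence "(\<zeta> * (Dd * sqrt (1 + exp (2 * \<gamma>))))^2 \<le> (sqrt \<epsilon>)^2"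
    using z Dd0 q by (intro power_mono) auto
  hence "(\<zeta> * Dd)^2 * (1 + exp (2 * \<gamma>)) \<le> \<epsilon>"
    using e by (simp add: power_mult_distrib add_pos_pos)
  moreover have "1 + exp (2 * \<gamma>) \<ge> 2" using g by simp
  ultimately have "(\<zeta> * Dd)^2 * 2 \<le> \<epsilon>"
    by (meson mult_left_mono order_trans zero_le_power2)
  thus ?thesis by simp
qed

lemma det_bound:
  assumes u: "u < n" and N: "N \<subseteq> mrf_nbhd n m J h g u"
    and hyp: "\<forall>i. i < n \<and> i \<noteq> u \<and> (\<exists>T. T \<subseteq> {0..<n} \<and> u \<in> T \<and> i \<in> T \<and> \<bar>fhat n m J h g T\<bar> \<ge> \<zeta>) \<longrightarrow> i \<in> N"
    and z: "\<zeta> > 0" and e: "\<epsilon> > 0"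
    and zle: "\<zeta> \<le> sqrt \<epsilon> / (real (rbm_D n m J h g) ^ rbm_d n m J * sqrt (1 + exp (2 * rbm_gamma n m J h g)))"
    and L: "Lexp n m J h g u (feat_dot N wh) \<le> Lexp n m J h g u (feat_dot N (wstar n m J h g u)) + tt"
  shows "(\<Sum>x\<in>cube n. rbm_marg n m J h g x * (rbm_cond n m J h g u x - sigmoid (feat_dot N wh x))\<^sup>2) \<le> (\<epsilon>/4 + tt) / 2"
proof -
  have Nn: "N \<subseteq> {0..<n}" "u \<notin> N" using N nbhd_sub nbhd_notu by blast+
  define mg where "mg = rbm_marg n m J h g"
  define cd where "cd = rbm_cond n m J h g u"
  define as where "as = astar n m J h g u"
  have mg0: "\<And>x. x \<in> cube n \<Longrightarrow> mg x \<ge> 0" unfolding mg_def using marg_pos less_imp_le by blast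
  have mg1: "(\<Sum>x\<in>cube n. mg x) = 1" unfolding mg_def by (rule marg_sum)
  have cdx: "\<And>x. x \<in> cube n \<Longrightarrow> cd x = sigmoid (as x)" unfolding cd_def as_def using cond_astar u by blast
  define Ls where "Ls = (\<Sum>x\<in>cube n. mg x * HH (cd x) (as x))"
  have P: "\<And>w. Lexp n m J h g u (feat_dot N w) = (\<Sum>x\<in>cube n. mg x * HH (cd x) (feat_dot N w x))"
    unfolding mg_def cd_def by (rule pairing[OF u]) (rule feat_upd[OF Nn(2)])
  have A: "2 * (\<Sum>x\<in>cube n. mg x * (cd x - sigmoid (feat_dot N wh x))\<^sup>2)
      \<le> Lexp n m J h g u (feat_dot N wh) - Ls"
  proof -
    have "2 * (\<Sum>x\<in>cube n. mg x * (cd x - sigmoid (feat_dot N wh x))\<^sup>2)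
        = (\<Sum>x\<in>cube n. mg x * (2 * (cd x - sigmoid (feat_dot N wh x))\<^sup>2))"
      by (simp add: sum_distrib_left mult_ac)
    also have "\<dots> \<le> (\<Sum>x\<in>cube n. mg x * (HH (cd x) (feat_dot N wh x) - HH (cd x) (as x)))"
      by (intro sum_mono mult_left_mono mg0) (simp_all add: cdx K1)
    also have "\<dots> = Lexp n m J h g u (feat_dot N wh) - Ls"
      unfolding P Ls_def by (simp add: sum_subtractf right_diff_distrib)
    finally show ?thesis .
  qed
  define B where "B = (\<Sum>T\<in>MSs n u N. \<bar>fhat n m J h g T\<bar>)"
  define Dd where "Dd = real (rbm_D n m J h g ^ rbm_d n m J)"
  have Bb: "B \<le> \<zeta> * Dd" unfolding B_def Dd_def using missing_bound[OF u N _ hyp] z by simp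
  have B0: "B \<ge> 0" unfolding B_def by (simp add: sum_nonneg)
  have zb: "(\<zeta> * Dd)^2 \<le> \<epsilon> / 2"
    by (rule zeta_bound[OF z e gamma_nonneg]) (use zle in \<open>simp_all add: Dd_def\<close>)
  have Bsq: "(2 * B)^2 / 8 \<le> \<epsilon> / 4"
  proof -
    have "B^2 \<le> (\<zeta> * Dd)^2" using Bb B0 by (intro power_mono) auto
    thus ?thesis using zb by (simp add: power_mult_distrib)
  qed
  have Bd: "Lexp n m J h g u (feat_dot N (wstar n m J h g u)) - Ls \<le> \<epsilon> / 4"
  proof -
    have "Lexp n m J h g u (feat_dot N (wstar n m J h g u)) - Ls
        = (\<Sum>x\<in>cube n. mg x * (HH (cd x) (feat_dot N (wstar n m J h g u) x) - HH (cd x) (as x)))"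
      unfolding P Ls_def by (simp add: sum_subtractf right_diff_distrib)
    also have "\<dots> \<le> (\<Sum>x\<in>cube n. mg x * ((2 * B)^2 / 8))"
    proof (intro sum_mono mult_left_mono mg0)
      fix x assume x: "x \<in> cube n"
      have "HH (cd x) (feat_dot N (wstar n m J h g u) x) - HH (cd x) (as x)
          \<le> (feat_dot N (wstar n m J h g u) x - as x)^2 / 8" unfolding cdx[OF x] by (rule K2)
      also have "(feat_dot N (wstar n m J h g u) x - as x)^2 \<le> (2 * B)^2"
      proof -
        have "\<bar>feat_dot N (wstar n m J h g u) x - as x\<bar> \<le> 2 * B"
          using bias[OF u Nn x, of m J h g] unfolding B_def as_def by (simp add: abs_minus_commute)
        thus ?thesis by (metis abs_le_square_iff abs_of_nonneg B0 mult_nonneg_nonneg zero_le_numeral power2_abs)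
      qed
      finally show "HH (cd x) (feat_dot N (wstar n m J h g u) x) - HH (cd x) (as x) \<le> (2 * B)^2 / 8"
        by simp
    qed
    also have "\<dots> = (\<Sum>x\<in>cube n. mg x) * ((2 * B)^2 / 8)" by (rule sum_distrib_right[symmetric])
    also have "\<dots> = (2 * B)^2 / 8" using mg1 by simp
    finally show ?thesis using Bsq by simp
  qed
  have "2 * (\<Sum>x\<in>cube n. mg x * (cd x - sigmoid (feat_dot N wh x))\<^sup>2) \<le> \<epsilon>/4 + tt"
    using A Bd L by simp
  thus ?thesis unfolding mg_def cd_def by simp
qed


lemma lg_deriv: "(lg has_real_derivative (sigmoid v - 1)) (at v)"
proof -
  have "((\<lambda>v. ln (1 + exp (- v))) has_real_derivative (- exp (- v) / (1 + exp (- v)))) (at v)"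
    by (auto intro!: derivative_eq_intros simp: add_pos_pos)
  moreover have "- exp (- v) / (1 + exp (- v)) = sigmoid v - 1" using one_minus_sigmoid[of v] by simp
  ultimately show ?thesis unfolding lg_def[abs_def] by simp
qed

lemma lg_lip: "\<bar>lg a - lg b\<bar> \<le> \<bar>a - b\<bar>"
proof -
  have main: "\<bar>lg a - lg b\<bar> \<le> \<bar>a - b\<bar>" if ab: "a \<le> b" for a b
  proof -
    have "lg b \<le> lg a"
      by (rule DERIV_nonpos_imp_nonincreasing[OF ab]) (use lg_deriv sigmoid_lt1 less_imp_le in \<open>force\<close>)
    moreover have "lg a + a \<le> lg b + b"
    proof (rule DERIV_nonneg_imp_nondecreasing[OF ab, of "\<lambda>v. lg v + v"])
      fix x
      have "((\<lambda>v. lg v + v) has_real_derivative (sigmoid x - 1 + 1)) (at x)"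
        by (intro derivative_intros lg_deriv)
      thus "\<exists>y. ((\<lambda>v. lg v + v) has_real_derivative y) (at x) \<and> y \<ge> 0"
        using sigmoid_pos[of x] by force
    qed
    ultimately show ?thesis using ab by simp
  qed
  show ?thesis
  proof (cases "a \<le> b")
    case True thus ?thesis by (rule main)
  next
    case False thus ?thesis using main[of b a] by (simp add: abs_minus_commute)
  qed
qed

lemma lg_zero: "lg 0 = ln 2" unfolding lg_def by simp

lemma loss_lg: "logistic_loss M s u N w = (1/real M) * (\<Sum>k<M. lg (s k u * feat_dot N w (s k)))"
  unfolding logistic_loss_def lg_def ..

lemma tail_u:
  fixes Wset :: "(nat set \<Rightarrow> real) set" and sg :: real
  assumes u: "u < n" and M: "M > 0" and W: "finite Wset" "Wset \<noteq> {}"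
    and R: "\<forall>w\<in>Wset. l1norm N w \<le> R" and R0: "R > 0" and t: "t \<ge> 0" and Nn: "N \<subseteq> {0..<n}"
    and sg: "sg = 1 \<or> sg = -1"
  shows "(\<Sum>s\<in>PiE {..<M} (\<lambda>_. cube n). pwt (rbm_marg n m J h g) M s *
           (if (\<exists>w\<in>Wset. sg * (Lexp n m J h g u (feat_dot N w) - logistic_loss M s u N w) \<ge> t) then 1 else 0))
     \<le> 2 * 2 ^ card N * exp (- (t^2 * M / (8 * R^2)))"
proof -
  define p where "p = rbm_marg n m J h g"
  define \<phi> where "\<phi> = (\<lambda>(x::nat \<Rightarrow> real) v. sg * (lg (x u * v) - ln 2))"
  have fN: "finite N" using Nn by (rule finite_subset) simp
  have pnn: "\<forall>x\<in>cube n. p x \<ge> 0" unfolding p_def using marg_pos less_imp_le by blast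
  have p1: "sum p (cube n) = 1" unfolding p_def by (rule marg_sum)
  have lip: "\<forall>x\<in>cube n. \<forall>a b. \<bar>\<phi> x a - \<phi> x b\<bar> \<le> \<bar>a - b\<bar>"
  proof (intro ballI allI)
    fix x a b assume x: "x \<in> cube n"
    have "\<bar>\<phi> x a - \<phi> x b\<bar> = \<bar>lg (x u * a) - lg (x u * b)\<bar>" unfolding \<phi>_def using sg by (auto simp: algebra_simps)
    also have "\<dots> \<le> \<bar>x u * a - x u * b\<bar>" by (rule lg_lip)
    also have "\<dots> = \<bar>a - b\<bar>" using cube_vals[OF x u] by (auto simp: algebra_simps)
    finally show "\<bar>\<phi> x a - \<phi> x b\<bar> \<le> \<bar>a - b\<bar>" .
  qed
  have z: "\<forall>x\<in>cube n. \<phi> x 0 = 0" unfolding \<phi>_def by (simp add: lg_zero)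
  have b: "\<forall>T\<in>Pow N. \<forall>x\<in>cube n. \<bar>chi T x\<bar> \<le> 1" using chi_abs by blast
  have RR: "\<forall>w\<in>Wset. (\<Sum>T\<in>Pow N. \<bar>w T\<bar>) \<le> R" using R unfolding l1norm_def .
  have fP: "finite (Pow N)" "Pow N \<noteq> {}" using fN by auto
  note T = unif_tail[OF cube_finite pnn p1 W M _ _ b RR R0 lip z t]
  have eqE: "(\<Sum>x\<in>cube n. p x * \<phi> x (\<Sum>T\<in>Pow N. w T * chi T x)) = sg * (Lexp n m J h g u (feat_dot N w) - ln 2)" for w
  proof -
    have "(\<Sum>x\<in>cube n. p x * \<phi> x (\<Sum>T\<in>Pow N. w T * chi T x))
        = sg * ((\<Sum>x\<in>cube n. p x * lg (x u * feat_dot N w x)) - (\<Sum>x\<in>cube n. p x) * ln 2)"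
      unfolding \<phi>_def feat_dot_def by (simp add: sum_distrib_left sum_distrib_right sum_subtractf algebra_simps)
    thus ?thesis using p1 unfolding Lexp_def p_def by simp
  qed
  have eqL: "(1/real M) * (\<Sum>k<M. \<phi> (s k) (\<Sum>T\<in>Pow N. w T * chi T (s k))) = sg * (logistic_loss M s u N w - ln 2)" for s w
  proof -
    have "(1/real M) * (\<Sum>k<M. \<phi> (s k) (\<Sum>T\<in>Pow N. w T * chi T (s k)))
        = sg * ((1/real M) * (\<Sum>k<M. lg (s k u * feat_dot N w (s k))) - (1/real M) * (real M * ln 2))"
      unfolding \<phi>_def feat_dot_def by (simp add: sum_distrib_left sum_subtractf algebra_simps)
    also have "(1/real M) * (real M * ln 2) = ln 2" using M by simp
    finally show ?thesis unfolding loss_lg by simp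
  qed
  have "(\<Sum>s\<in>PiE {..<M} (\<lambda>_. cube n). pwt (rbm_marg n m J h g) M s *
           (if (\<exists>w\<in>Wset. sg * (Lexp n m J h g u (feat_dot N w) - logistic_loss M s u N w) \<ge> t) then 1 else 0))
     = (\<Sum>s\<in>PiE {..<M} (\<lambda>_. cube n). pwt p M s *
     (if (\<exists>w\<in>Wset. (\<Sum>x\<in>cube n. p x * \<phi> x (\<Sum>T\<in>Pow N. w T * chi T x))
                   - (1/real M) * (\<Sum>k<M. \<phi> (s k) (\<Sum>T\<in>Pow N. w T * chi T (s k))) \<ge> t) then 1 else 0))"
    unfolding eqE eqL unfolding p_def by (simp add: algebra_simps)
  also have "\<dots> \<le> 2 * real (card (Pow N)) * exp (- (t^2 * M / (8 * R^2)))"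
    using T[OF fP] by simp
  also have "real (card (Pow N)) = 2 ^ card N" using fN by (simp add: card_Pow)
  finally show ?thesis by simp
qed


lemma small_gamma_good:
  assumes u: "u < n" and N: "N \<subseteq> mrf_nbhd n m J h g u" and w: "l1norm N w \<le> 2 * rbm_gamma n m J h g"
    and ge: "(rbm_gamma n m J h g)^2 \<le> \<epsilon>"
  shows "(\<Sum>x\<in>cube n. rbm_marg n m J h g x * (rbm_cond n m J h g u x - sigmoid (feat_dot N w x))\<^sup>2) \<le> \<epsilon>"
proof -
  define \<gamma> where "\<gamma> = rbm_gamma n m J h g"
  have "(\<Sum>x\<in>cube n. rbm_marg n m J h g x * (rbm_cond n m J h g u x - sigmoid (feat_dot N w x))\<^sup>2)
      \<le> (\<Sum>x\<in>cube n. rbm_marg n m J h g x * \<gamma>^2)"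
  proof (intro sum_mono mult_left_mono)
    fix x assume x: "x \<in> cube n"
    show "0 \<le> rbm_marg n m J h g x" using marg_pos[OF x, of m J h g] by simp
    have "\<bar>rbm_cond n m J h g u x - sigmoid (feat_dot N w x)\<bar> \<le> \<bar>astar n m J h g u x - feat_dot N w x\<bar> / 4"
      unfolding cond_astar[OF x u] by (rule sigmoid_lip)
    also have "\<bar>astar n m J h g u x - feat_dot N w x\<bar> \<le> 4 * \<gamma>"
      using astar_abs[OF x u, of m J h g] feat_abs[OF x, of N w] w unfolding \<gamma>_def by linarith
    finally have "\<bar>rbm_cond n m J h g u x - sigmoid (feat_dot N w x)\<bar> \<le> \<gamma>" by simp
    thus "(rbm_cond n m J h g u x - sigmoid (feat_dot N w x))\<^sup>2 \<le> \<gamma>^2"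
      by (metis abs_le_square_iff abs_of_nonneg abs_ge_zero order_trans power2_abs)
  qed
  also have "\<dots> = \<gamma>^2" using marg_sum[of n m J h g] by (simp add: sum_distrib_right[symmetric])
  finally show ?thesis using ge unfolding \<gamma>_def by simp
qed

lemma good_from_dev:
  assumes u: "u < n" and N: "N \<subseteq> mrf_nbhd n m J h g u"
    and hyp: "\<forall>i. i < n \<and> i \<noteq> u \<and> (\<exists>T. T \<subseteq> {0..<n} \<and> u \<in> T \<and> i \<in> T \<and> \<bar>fhat n m J h g T\<bar> \<ge> \<zeta>) \<longrightarrow> i \<in> N"
    and z: "\<zeta> > 0" and e: "\<epsilon> > 0"
    and zle: "\<zeta> \<le> sqrt \<epsilon> / (real (rbm_D n m J h g) ^ rbm_d n m J * sqrt (1 + exp (2 * rbm_gamma n m J h g)))"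
    and hW: "\<forall>w. l1norm N w \<le> 2 * rbm_gamma n m J h g \<longrightarrow> logistic_loss M s u N wh \<le> logistic_loss M s u N w"
    and d1: "Lexp n m J h g u (feat_dot N wh) - logistic_loss M s u N wh < \<epsilon>/2"
    and d2: "logistic_loss M s u N (wstar n m J h g u) - Lexp n m J h g u (feat_dot N (wstar n m J h g u)) < \<epsilon>/2"
  shows "(\<Sum>x\<in>cube n. rbm_marg n m J h g x * (rbm_cond n m J h g u x - sigmoid (feat_dot N wh x))\<^sup>2) \<le> \<epsilon>"
proof -
  have Nn: "N \<subseteq> {0..<n}" "u \<notin> N" using N nbhd_sub nbhd_notu by blast+
  have "logistic_loss M s u N wh \<le> logistic_loss M s u N (wstar n m J h g u)"
    using hW l1_wstar[OF u Nn] by blast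
  hence "Lexp n m J h g u (feat_dot N wh) \<le> Lexp n m J h g u (feat_dot N (wstar n m J h g u)) + \<epsilon>"
    using d1 d2 by simp
  from det_bound[OF u N hyp z e zle this]
  have "(\<Sum>x\<in>cube n. rbm_marg n m J h g x * (rbm_cond n m J h g u x - sigmoid (feat_dot N wh x))\<^sup>2) \<le> (\<epsilon>/4 + \<epsilon>)/2" .
  also have "\<dots> \<le> \<epsilon>" using e by simp
  finally show ?thesis .
qed


lemma main_thm:
  fixes n m :: nat and J :: "nat \<Rightarrow> nat \<Rightarrow> real" and h g :: "nat \<Rightarrow> real"
    and \<delta> \<epsilon> \<zeta> :: real and N :: "nat \<Rightarrow> nat set" and M :: nat
    and W :: "(nat \<Rightarrow> nat \<Rightarrow> real) \<Rightarrow> nat \<Rightarrow> nat set \<Rightarrow> real"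
  assumes \<delta>: "\<delta> > 0" and \<epsilon>: "\<epsilon> > 0" and \<zeta>: "\<zeta> > 0"
    and hN: "\<forall>u<n. N u \<subseteq> mrf_nbhd n m J h g u \<and>
        (\<forall>i. i < n \<and> i \<noteq> u \<and>
           (\<exists>T. T \<subseteq> {0..<n} \<and> u \<in> T \<and> i \<in> T \<and> \<bar>fhat n m J h g T\<bar> \<ge> \<zeta>)
           \<longrightarrow> i \<in> N u)"
    and hW: "\<forall>s\<in>PiE {..<M} (\<lambda>_. cube n). \<forall>u<n.
        l1norm (N u) (W s u) \<le> 2 * rbm_gamma n m J h g \<and>
        (\<forall>w. l1norm (N u) w \<le> 2 * rbm_gamma n m J h g \<longrightarrow>
             logistic_loss M s u (N u) (W s u) \<le> logistic_loss M s u (N u) w)"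
    and hM: "real M \<ge> 128 * (rbm_gamma n m J h g)\<^sup>2
                * ln (8 * real n * 2 ^ rbm_D n m J h g / \<delta>) / \<epsilon>\<^sup>2"
    and hz: "\<zeta> \<le> sqrt \<epsilon> / (real (rbm_D n m J h g) ^ rbm_d n m J
                   * sqrt (1 + exp (2 * rbm_gamma n m J h g)))"
  shows "(\<Sum>s\<in>PiE {..<M} (\<lambda>_. cube n).
        (\<Prod>k<M. rbm_marg n m J h g (s k)) *
        (if (\<forall>u<n. (\<Sum>x\<in>cube n. rbm_marg n m J h g x *
                (rbm_cond n m J h g u x - sigmoid (feat_dot (N u) (W s u) x))\<^sup>2) \<le> \<epsilon>)
         then 1 else 0)) \<ge> 1 - \<delta>"
proof -
  define PS where "PS = PiE {..<M} (\<lambda>_. cube n)"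
  define \<gamma> where "\<gamma> = rbm_gamma n m J h g"
  define D where "D = rbm_D n m J h g"
  define mg where "mg = rbm_marg n m J h g"
  define good where "good = (\<lambda>s. \<forall>u<n. (\<Sum>x\<in>cube n. rbm_marg n m J h g x *
                (rbm_cond n m J h g u x - sigmoid (feat_dot (N u) (W s u) x))\<^sup>2) \<le> \<epsilon>)"
  have pw: "(\<Prod>k<M. rbm_marg n m J h g (s k)) = pwt mg M s" for s unfolding pwt_def mg_def ..
  have mg0: "\<forall>x\<in>cube n. mg x \<ge> 0" unfolding mg_def using marg_pos less_imp_le by blast
  have mg1: "sum mg (cube n) = 1" unfolding mg_def by (rule marg_sum)
  have pw0: "\<And>s. s \<in> PS \<Longrightarrow> pwt mg M s \<ge> 0" unfolding PS_def using mg0 pwt_nonneg by blast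
  have pw1: "(\<Sum>s\<in>PS. pwt mg M s) = 1" unfolding PS_def by (rule pwt_sum1[OF cube_finite mg1])
  have finPS: "finite PS" unfolding PS_def by (rule finite_PiE_lessThan[OF cube_finite])
  have g0: "\<gamma> \<ge> 0" unfolding \<gamma>_def by (rule gamma_nonneg)
  have goal_eq: "(\<Sum>s\<in>PiE {..<M} (\<lambda>_. cube n).
        (\<Prod>k<M. rbm_marg n m J h g (s k)) *
        (if (\<forall>u<n. (\<Sum>x\<in>cube n. rbm_marg n m J h g x *
                (rbm_cond n m J h g u x - sigmoid (feat_dot (N u) (W s u) x))\<^sup>2) \<le> \<epsilon>)
         then 1 else 0)) = (\<Sum>s\<in>PS. pwt mg M s * (if good s then 1 else 0))"
    unfolding PS_def good_def pw ..
  have S0: "(\<Sum>s\<in>PS. pwt mg M s * (if good s then 1 else 0)) \<ge> 0"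
    by (intro sum_nonneg mult_nonneg_nonneg pw0) auto
  have "(\<Sum>s\<in>PS. pwt mg M s * (if good s then 1 else 0)) \<ge> 1 - \<delta>"
  proof (cases "\<delta> \<ge> 1")
    case True thus ?thesis using S0 by simp
  next
    case False
    hence \<delta>1: "\<delta> < 1" by simp
    show ?thesis
    proof (cases "n = 0 \<or> \<gamma>^2 \<le> \<epsilon>")
      case True
      have "\<forall>s\<in>PS. good s"
      proof
        fix s assume s: "s \<in> PS"
        show "good s" unfolding good_def
        proof (intro allI impI)
          fix u assume u: "u < n"
          hence ge: "\<gamma>^2 \<le> \<epsilon>" using True by simp
          show "(\<Sum>x\<in>cube n. rbm_marg n m J h g x * (rbm_cond n m J h g u x - sigmoid (feat_dot (N u) (W s u) x))\<^sup>2) \<le> \<epsilon>"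
          proof (rule small_gamma_good[OF u _ _ ge[unfolded \<gamma>_def]])
            show "N u \<subseteq> mrf_nbhd n m J h g u" using conjunct1[OF hN[rule_format, OF u]] .
            show "l1norm (N u) (W s u) \<le> 2 * rbm_gamma n m J h g"
              using conjunct1[OF hW[rule_format, OF s[unfolded PS_def] u]] .
          qed
        qed
      qed
      hence "(\<Sum>s\<in>PS. pwt mg M s * (if good s then 1 else 0)) = (\<Sum>s\<in>PS. pwt mg M s)"
        by (intro sum.cong) auto
      thus ?thesis using pw1 \<delta> by simp
    next
      case False
      hence n0: "n > 0" and gbig: "\<gamma>^2 > \<epsilon>" by auto
      have gpos: "\<gamma> > 0" using g0 gbig \<epsilon> by (cases "\<gamma> = 0") auto
      define Lv where "Lv = ln (8 * real n * 2 ^ D / \<delta>)"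
      have q1: "8 * real n * 2 ^ D / \<delta> > 1"
      proof -
        have a: "real n \<ge> 1" using n0 by simp
        have b: "(2::real) ^ D \<ge> 1" by simp
        have "8 * real n * 2 ^ D \<ge> 8 * 1 * 1" using a b by (intro mult_mono) auto
        hence "8 * real n * 2 ^ D \<ge> 8" by simp
        hence "8 * real n * 2 ^ D > \<delta>" using \<delta>1 by simp
        thus ?thesis using \<delta> by simp
      qed
      have Lv0: "Lv > 0" unfolding Lv_def using q1 by simp
      have hM': "real M \<ge> 128 * \<gamma>^2 * Lv / \<epsilon>^2" using hM unfolding \<gamma>_def Lv_def D_def .
      have Mpos: "M > 0"
      proof -
        have "128 * \<gamma>^2 * Lv / \<epsilon>^2 > 0" using gpos Lv0 \<epsilon> by simp
        thus ?thesis using hM' by linarith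
      qed
      define t where "t = \<epsilon> / 2"
      define R where "R = 2 * \<gamma>"
      have R0: "R > 0" unfolding R_def using gpos by simp
      have t0: "t \<ge> 0" unfolding t_def using \<epsilon> by simp
      have expb: "exp (- (t^2 * M / (8 * R^2))) \<le> \<delta> / (8 * real n * 2 ^ D)"
      proof -
        have "t^2 * M / (8 * R^2) = \<epsilon>^2 * M / (128 * \<gamma>^2)"
          unfolding t_def R_def by (simp add: power2_eq_square field_simps)
        also have "\<dots> \<ge> Lv"
        proof -
          have "\<epsilon>^2 * (128 * \<gamma>^2 * Lv / \<epsilon>^2) \<le> \<epsilon>^2 * M"
            using hM' by (intro mult_left_mono) auto
          hence "128 * \<gamma>^2 * Lv \<le> \<epsilon>^2 * M" using \<epsilon> by simp
          thus ?thesis using gpos by (simp add: field_simps)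
        qed
        finally have "- (t^2 * M / (8 * R^2)) \<le> - Lv" by simp
        hence "exp (- (t^2 * M / (8 * R^2))) \<le> exp (- Lv)" by simp
        also have "exp (- Lv) = \<delta> / (8 * real n * 2 ^ D)"
          unfolding Lv_def using q1 by (simp add: exp_minus exp_ln)
        finally show ?thesis .
      qed
      define Wu where "Wu = (\<lambda>u. (\<lambda>s. W s u) ` PS \<union> {wstar n m J h g u})"
      define E where "E = (\<lambda>(sg::real) u s. \<exists>w\<in>Wu u. sg * (Lexp n m J h g u (feat_dot (N u) w) - logistic_loss M s u (N u) w) \<ge> t)"
      have PE: "(\<Sum>s\<in>PS. pwt mg M s * (if E sg u s then 1 else 0)) \<le> \<delta> / (4 * n)"
        if u: "u < n" and sg: "sg = 1 \<or> sg = -1" for u sg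
      proof -
        have Nu: "N u \<subseteq> mrf_nbhd n m J h g u" using hN u by blast
        have Nn: "N u \<subseteq> {0..<n}" "u \<notin> N u" using Nu nbhd_sub nbhd_notu by blast+
        have finW: "finite (Wu u)" "Wu u \<noteq> {}" unfolding Wu_def using finPS by auto
        have RW: "\<forall>w\<in>Wu u. l1norm (N u) w \<le> R"
          unfolding Wu_def R_def \<gamma>_def using hW u l1_wstar[OF u Nn] unfolding PS_def by auto
        have "(\<Sum>s\<in>PS. pwt mg M s * (if E sg u s then 1 else 0))
            \<le> 2 * 2 ^ card (N u) * exp (- (t^2 * M / (8 * R^2)))"
          unfolding PS_def E_def mg_def by (rule tail_u[OF u Mpos finW RW R0 t0 Nn(1) sg])
        also have "\<dots> \<le> 2 * 2 ^ D * (\<delta> / (8 * real n * 2 ^ D))"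
        proof (rule mult_mono[OF _ expb])
          have "card (N u) \<le> card (mrf_nbhd n m J h g u)"
            using Nu by (intro card_mono) (auto intro: finite_subset[OF nbhd_sub])
          also have "\<dots> \<le> D" unfolding D_def by (rule D_ge[OF u])
          finally show "2 * 2 ^ card (N u) \<le> 2 * (2::real) ^ D" by simp
        qed auto
        also have "\<dots> = \<delta> / (4 * n)" using n0 by (simp add: field_simps)
        finally show ?thesis .
      qed
      have ind: "(if good s then 1 else 0) \<ge> (1::real) - (\<Sum>u<n. (if E 1 u s then 1 else 0) + (if E (-1) u s then 1 else 0))"
        if s: "s \<in> PS" for s
      proof (cases "\<exists>u<n. E 1 u s \<or> E (-1) u s")
        case True
        then obtain u where u: "u < n" "E 1 u s \<or> E (-1) u s" by blast
        have "1 \<le> (if E 1 u s then 1 else 0) + (if E (-1) u s then 1 else (0::real))" using u by auto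
        also have "\<dots> \<le> (\<Sum>u<n. (if E 1 u s then 1 else 0) + (if E (-1) u s then 1 else (0::real)))"
          by (rule member_le_sum) (use u in auto)
        finally have "1 \<le> (\<Sum>u<n. (if E 1 u s then 1 else 0) + (if E (-1) u s then 1 else (0::real)))"
          (is "1 \<le> ?S") .
        hence "1 - ?S \<le> 0" by simp
        moreover have "(0::real) \<le> (if good s then 1 else 0)" by simp
        ultimately show ?thesis by (rule order_trans)
      next
        case False
        have "good s" unfolding good_def
        proof (intro allI impI)
          fix u assume u: "u < n"
          have Nu: "N u \<subseteq> mrf_nbhd n m J h g u" and hyp: "\<forall>i. i < n \<and> i \<noteq> u \<and>
             (\<exists>T. T \<subseteq> {0..<n} \<and> u \<in> T \<and> i \<in> T \<and> \<bar>fhat n m J h g T\<bar> \<ge> \<zeta>) \<longrightarrow> i \<in> N u"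
            using hN u by blast+
          have hWs: "\<forall>w. l1norm (N u) w \<le> 2 * rbm_gamma n m J h g \<longrightarrow>
             logistic_loss M s u (N u) (W s u) \<le> logistic_loss M s u (N u) w"
            using hW s u unfolding PS_def by blast
          have in1: "W s u \<in> Wu u" and in2: "wstar n m J h g u \<in> Wu u" unfolding Wu_def using s by auto
          have nE: "\<not> E 1 u s" "\<not> E (-1) u s" using False u by auto
          have d1: "Lexp n m J h g u (feat_dot (N u) (W s u)) - logistic_loss M s u (N u) (W s u) < \<epsilon>/2"
          proof -
            have "\<not> (t \<le> 1 * (Lexp n m J h g u (feat_dot (N u) (W s u)) - logistic_loss M s u (N u) (W s u)))"
              using nE(1) in1 unfolding E_def by blast
            thus ?thesis unfolding t_def by simp
          qed
          have d2: "logistic_loss M s u (N u) (wstar n m J h g u) - Lexp n m J h g u (feat_dot (N u) (wstar n m J h g u)) < \<epsilon>/2"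
          proof -
            have "\<not> (t \<le> (-1) * (Lexp n m J h g u (feat_dot (N u) (wstar n m J h g u)) - logistic_loss M s u (N u) (wstar n m J h g u)))"
              using nE(2) in2 unfolding E_def by blast
            thus ?thesis unfolding t_def by simp
          qed
          show "(\<Sum>x\<in>cube n. rbm_marg n m J h g x * (rbm_cond n m J h g u x - sigmoid (feat_dot (N u) (W s u) x))\<^sup>2) \<le> \<epsilon>"
            by (rule good_from_dev[OF u Nu hyp \<zeta> \<epsilon> hz hWs d1 d2])
        qed
        moreover have "(\<Sum>u<n. (if E 1 u s then 1 else 0) + (if E (-1) u s then 1 else (0::real))) \<ge> 0"
          by (intro sum_nonneg) auto
        ultimately show ?thesis by simp
      qed
      have "(\<Sum>s\<in>PS. pwt mg M s * (if good s then 1 else 0))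
          \<ge> (\<Sum>s\<in>PS. pwt mg M s * (1 - (\<Sum>u<n. (if E 1 u s then 1 else 0) + (if E (-1) u s then 1 else 0))))"
        by (intro sum_mono mult_left_mono ind pw0)
      moreover have "(\<Sum>s\<in>PS. pwt mg M s * (1 - (\<Sum>u<n. (if E 1 u s then 1 else 0) + (if E (-1) u s then 1 else 0))))
          = 1 - (\<Sum>u<n. (\<Sum>s\<in>PS. pwt mg M s * (if E 1 u s then 1 else 0)) + (\<Sum>s\<in>PS. pwt mg M s * (if E (-1) u s then 1 else 0)))"
      proof -
        have "(\<Sum>s\<in>PS. pwt mg M s * (1 - (\<Sum>u<n. (if E 1 u s then 1 else 0) + (if E (-1) u s then 1 else 0))))
            = (\<Sum>s\<in>PS. pwt mg M s) - (\<Sum>s\<in>PS. \<Sum>u<n. pwt mg M s * (if E 1 u s then 1 else 0) + pwt mg M s * (if E (-1) u s then 1 else 0))"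
          by (simp add: right_diff_distrib sum_subtractf sum_distrib_left distrib_left)
        also have "(\<Sum>s\<in>PS. \<Sum>u<n. pwt mg M s * (if E 1 u s then 1 else 0) + pwt mg M s * (if E (-1) u s then 1 else 0))
            = (\<Sum>u<n. \<Sum>s\<in>PS. pwt mg M s * (if E 1 u s then 1 else 0) + pwt mg M s * (if E (-1) u s then 1 else 0))"
          by (rule sum.swap)
        also have "\<dots> = (\<Sum>u<n. (\<Sum>s\<in>PS. pwt mg M s * (if E 1 u s then 1 else 0)) + (\<Sum>s\<in>PS. pwt mg M s * (if E (-1) u s then 1 else 0)))"
          by (simp add: sum.distrib)
        finally show ?thesis using pw1 by simp
      qed
      moreover have "(\<Sum>u<n. (\<Sum>s\<in>PS. pwt mg M s * (if E 1 u s then 1 else 0)) + (\<Sum>s\<in>PS. pwt mg M s * (if E (-1) u s then 1 else 0)))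
          \<le> (\<Sum>u<n. \<delta> / (4 * n) + \<delta> / (4 * n))"
        by (intro sum_mono add_mono PE) auto
      moreover have "(\<Sum>u<n. \<delta> / (4 * n) + \<delta> / (4 * n)) = \<delta> / 2"
        using n0 by simp
      ultimately show ?thesis using \<delta> by linarith
    qed
  qed
  thus ?thesis unfolding goal_eq .
qed

theorem theorem6:
  "\<exists>C::real. C > 0 \<and>
    (\<forall>(n::nat) (m::nat) (J::nat \<Rightarrow> nat \<Rightarrow> real) (h::nat \<Rightarrow> real) (g::nat \<Rightarrow> real)
       (\<delta>::real) (\<epsilon>::real) (\<zeta>::real) (N::nat \<Rightarrow> nat set) (M::nat)
       (W::(nat \<Rightarrow> nat \<Rightarrow> real) \<Rightarrow> nat \<Rightarrow> nat set \<Rightarrow> real).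
     \<delta> > 0 \<longrightarrow> \<epsilon> > 0 \<longrightarrow> \<zeta> > 0 \<longrightarrow>
     (\<forall>u<n. N u \<subseteq> mrf_nbhd n m J h g u \<and>
        (\<forall>i. i < n \<and> i \<noteq> u \<and>
           (\<exists>T. T \<subseteq> {0..<n} \<and> u \<in> T \<and> i \<in> T \<and> \<bar>fhat n m J h g T\<bar> \<ge> \<zeta>)
           \<longrightarrow> i \<in> N u)) \<longrightarrow>
     (\<forall>s\<in>PiE {..<M} (\<lambda>_. cube n). \<forall>u<n.
        l1norm (N u) (W s u) \<le> 2 * rbm_gamma n m J h g \<and>
        (\<forall>w. l1norm (N u) w \<le> 2 * rbm_gamma n m J h g \<longrightarrow>
             logistic_loss M s u (N u) (W s u) \<le> logistic_loss M s u (N u) w)) \<longrightarrow>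
     real M \<ge> C * (rbm_gamma n m J h g)\<^sup>2
                * ln (8 * real n * 2 ^ rbm_D n m J h g / \<delta>) / \<epsilon>\<^sup>2 \<longrightarrow>
     \<zeta> \<le> sqrt \<epsilon> / (real (rbm_D n m J h g) ^ rbm_d n m J
                   * sqrt (1 + exp (2 * rbm_gamma n m J h g))) \<longrightarrow>
     (\<Sum>s\<in>PiE {..<M} (\<lambda>_. cube n).
        (\<Prod>k<M. rbm_marg n m J h g (s k)) *
        (if (\<forall>u<n. (\<Sum>x\<in>cube n. rbm_marg n m J h g x *
                (rbm_cond n m J h g u x - sigmoid (feat_dot (N u) (W s u) x))\<^sup>2) \<le> \<epsilon>)
         then 1 else 0)) \<ge> 1 - \<delta>)"
  apply (intro exI[of _ 128] conjI allI impI)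
   apply simp
  apply (rule main_thm; assumption)
  done

end
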